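(* Let $\Gamma$ be a circle of radius $R$ with center $O$ in a plane $\Pi\subset\mathbb{R}^3$, let $l$ be the line through $O$ perpendicular to $\Pi$, and let $O_0\ne O_1$ be points of $l$ not in $\Pi$. Let $\mathcal D=\bigcup_{Y\in\Gamma}\operatorname{conv}\{O_0,O_1,Y\}$ be the dicone with vertices $O_0,O_1$, and for $i=0,1$ let $\mathcal U_{O_i}=\bigcup_{Y\in\Gamma}O_iY$ be the lateral conical surface with apex $O_i$. Let $f$ be a convex function defined on $\mathcal D$, and let $g(\mathbf x)=\frac{f(\mathbf x)}{\operatorname{dist}(\mathbf x,l)}$, where $\operatorname{dist}(\mathbf x,l)$ is the distance from $\mathbf x$ to $l$. Then $$\operatorname{Avg}(f,\mathcal D)\le\frac R4\left(\operatorname{Avg}(g,\mathcal U_{O_0})+\operatorname{Avg}(g,\mathcal U_{O_1})\right).$$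
   Context: $\operatorname{Avg}(f,\mathcal D)$ is the average of $f$ over $\mathcal D$ with respect to volume, and $\operatorname{Avg}(g,\mathcal U_{O_i})=\frac{1}{\operatorname{Area}(\mathcal U_{O_i})}\iint_{\mathcal U_{O_i}}g\,dS$ is the average with respect to surface area. *)

theory Defs
  imports "HOL-Analysis.Analysis"
begin

definition plane3 :: "real^3 \<Rightarrow> real^3 \<Rightarrow> real^3 \<Rightarrow> (real^3) set" where
  "plane3 C e1 e2 = {C + a *\<^sub>R e1 + b *\<^sub>R e2 | a b. True}"

definition axis3 :: "real^3 \<Rightarrow> real^3 \<Rightarrow> real^3 \<Rightarrow> (real^3) set" where
  "axis3 C e1 e2 = {C + t *\<^sub>R cross3 e1 e2 | t. True}"

definition circle3 :: "real^3 \<Rightarrow> real^3 \<Rightarrow> real^3 \<Rightarrow> real \<Rightarrow> (real^3) set" where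
  "circle3 C e1 e2 R = {Y \<in> plane3 C e1 e2. dist C Y = R}"

definition dicone :: "(real^3) set \<Rightarrow> real^3 \<Rightarrow> real^3 \<Rightarrow> (real^3) set" where
  "dicone \<Gamma> O0 O1 = (\<Union>Y\<in>\<Gamma>. convex hull {O0, O1, Y})"

definition circ_param :: "real^3 \<Rightarrow> real^3 \<Rightarrow> real^3 \<Rightarrow> real \<Rightarrow> real \<Rightarrow> real^3" where
  "circ_param C e1 e2 R \<theta> = C + (R * cos \<theta>) *\<^sub>R e1 + (R * sin \<theta>) *\<^sub>R e2"

definition cone_param :: "real^3 \<Rightarrow> real^3 \<Rightarrow> real^3 \<Rightarrow> real \<Rightarrow> real^3 \<Rightarrow> real \<times> real \<Rightarrow> real^3" where
  "cone_param C e1 e2 R A = (\<lambda>(t, \<theta>). A + t *\<^sub>R (circ_param C e1 e2 R \<theta> - A))"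

definition cone_dom :: "(real \<times> real) set" where
  "cone_dom = cbox (0, 0) (1, 2 * pi)"

definition surf_density :: "(real \<times> real \<Rightarrow> real^3) \<Rightarrow> (real^3 \<Rightarrow> real) \<Rightarrow> real \<times> real \<Rightarrow> real" where
  "surf_density \<phi> g = (\<lambda>(u, v). g (\<phi> (u, v)) *
      norm (cross3 (vector_derivative (\<lambda>s. \<phi> (s, v)) (at u))
                   (vector_derivative (\<lambda>s. \<phi> (u, s)) (at v))))"

definition surface_integrable :: "(real \<times> real \<Rightarrow> real^3) \<Rightarrow> (real \<times> real) set \<Rightarrow> (real^3 \<Rightarrow> real) \<Rightarrow> bool" where
  "surface_integrable \<phi> P g \<longleftrightarrow> surf_density \<phi> g integrable_on P"

definition surface_integral :: "(real \<times> real \<Rightarrow> real^3) \<Rightarrow> (real \<times> real) set \<Rightarrow> (real^3 \<Rightarrow> real) \<Rightarrow> real" where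
  "surface_integral \<phi> P g = integral P (surf_density \<phi> g)"

definition surface_avg :: "(real \<times> real \<Rightarrow> real^3) \<Rightarrow> (real \<times> real) set \<Rightarrow> (real^3 \<Rightarrow> real) \<Rightarrow> real" where
  "surface_avg \<phi> P g = surface_integral \<phi> P g / surface_integral \<phi> P (\<lambda>_. 1)"

definition vol_avg :: "(real^3) set \<Rightarrow> (real^3 \<Rightarrow> real) \<Rightarrow> real" where
  "vol_avg D f = integral D f / Henstock_Kurzweil_Integration.content D"

text \<open>Convexity of a function defined on a (possibly non-convex) set D: the convexity
  inequality along every segment contained in D. Coincides with convex_on when D is convex.\<close>
definition convex_fun_on :: "(real^3) set \<Rightarrow> (real^3 \<Rightarrow> real) \<Rightarrow> bool" where
  "convex_fun_on D f \<longleftrightarrow> (\<forall>x\<in>D. \<forall>y\<in>D. closed_segment x y \<subseteq> D \<longrightarrow>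
     (\<forall>t::real. 0 \<le> t \<and> t \<le> 1 \<longrightarrow> f ((1 - t) *\<^sub>R x + t *\<^sub>R y) \<le> (1 - t) * f x + t * f y))"

end

theory Submission
  imports Defs
begin


lemma frame_facts:
  fixes e1 e2 :: "real^3"
  assumes "e1 \<bullet> e1 = 1" "e2 \<bullet> e2 = 1" "e1 \<bullet> e2 = 0"
  shows "cross3 e1 e2 \<bullet> cross3 e1 e2 = 1" "cross3 e1 e2 \<bullet> e1 = 0" "cross3 e1 e2 \<bullet> e2 = 0"
    "cross3 e1 (cross3 e1 e2) = - e2" "cross3 e2 (cross3 e1 e2) = e1"
proof -
  show "cross3 e1 e2 \<bullet> cross3 e1 e2 = 1"
    using assms by (simp add: dot_cross inner_commute)
  show "cross3 e1 e2 \<bullet> e1 = 0" "cross3 e1 e2 \<bullet> e2 = 0"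
    by (simp_all add: dot_cross_self inner_commute)
  show "cross3 e1 (cross3 e1 e2) = - e2" "cross3 e2 (cross3 e1 e2) = e1"
    using assms by (simp_all add: Lagrange inner_commute)
qed

lemma frame_expand:
  fixes e1 e2 x :: "real^3"
  assumes "e1 \<bullet> e1 = 1" "e2 \<bullet> e2 = 1" "e1 \<bullet> e2 = 0"
  shows "x = (x \<bullet> e1) *\<^sub>R e1 + (x \<bullet> e2) *\<^sub>R e2 + (x \<bullet> cross3 e1 e2) *\<^sub>R cross3 e1 e2"
proof -
  note F = frame_facts[OF assms]
  define n where "n = cross3 e1 e2"
  define y where "y = x - ((x \<bullet> e1) *\<^sub>R e1 + (x \<bullet> e2) *\<^sub>R e2 + (x \<bullet> n) *\<^sub>R n)"
  have y1: "y \<bullet> e1 = 0" and y2: "y \<bullet> e2 = 0" and y3: "y \<bullet> n = 0"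
    using assms F unfolding y_def n_def
    by (simp_all add: inner_diff_left inner_add_left inner_commute[of e2 e1] inner_commute[of "cross3 e1 e2" e1]
          inner_commute[of "cross3 e1 e2" e2])
  have "cross3 y n = (y \<bullet> e2) *\<^sub>R e1 - (y \<bullet> e1) *\<^sub>R e2"
    unfolding n_def by (simp add: Lagrange)
  hence "cross3 y n = 0" using y1 y2 by simp
  hence "(norm y)^2 * (norm n)^2 - (y \<bullet> n)^2 = 0"
    using norm_cross[of y n] by simp
  moreover have "norm n = 1" using F unfolding n_def by (simp add: norm_eq_sqrt_inner)
  ultimately have "norm y = 0" using y3 by simp
  thus ?thesis unfolding y_def n_def by simp
qed

locale dcone =
  fixes C e1 e2 :: "real^3" and R h0 h1 :: real
  assumes e11: "e1 \<bullet> e1 = 1" and e22: "e2 \<bullet> e2 = 1" and e12: "e1 \<bullet> e2 = 0"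
    and Rpos: "0 < R" and h0nz: "h0 \<noteq> 0" and h1nz: "h1 \<noteq> 0" and hne: "h0 \<noteq> h1"
begin

definition "nn = cross3 e1 e2"
definition "uu \<theta> = cos \<theta> *\<^sub>R e1 + sin \<theta> *\<^sub>R e2"
definition "vv \<theta> = (- sin \<theta>) *\<^sub>R e1 + cos \<theta> *\<^sub>R e2"
definition "O0 = C + h0 *\<^sub>R nn"
definition "O1 = C + h1 *\<^sub>R nn"
definition "Yc \<theta> = C + R *\<^sub>R uu \<theta>"
definition "EE h t \<theta> = C + ((1-t)*h) *\<^sub>R nn + (t*R) *\<^sub>R uu \<theta>"
definition "HH w = (1-w)*h0 + w*h1"
definition "GG t \<theta> w = C + ((1-t) * HH w) *\<^sub>R nn + (t*R) *\<^sub>R uu \<theta>"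
definition "DD = dicone (circle3 C e1 e2 R) O0 O1"
definition "TT \<theta> = convex hull {O0, O1, Yc \<theta>}"

lemma e21: "e2 \<bullet> e1 = 0" using e12 by (simp add: inner_commute)
lemma nn_facts [simp]: "nn \<bullet> nn = 1" "nn \<bullet> e1 = 0" "nn \<bullet> e2 = 0" "e1 \<bullet> nn = 0" "e2 \<bullet> nn = 0"
  using frame_facts[OF e11 e22 e12] unfolding nn_def by (simp_all add: inner_commute)
lemma cross_nn: "cross3 e1 nn = - e2" "cross3 e2 nn = e1" "cross3 e1 e2 = nn"
  using frame_facts[OF e11 e22 e12] unfolding nn_def by simp_all
lemmas frame_simps [simp] = e11 e22 e12 e21

lemma uu_facts [simp]: "uu \<theta> \<bullet> uu \<theta> = 1" "uu \<theta> \<bullet> nn = 0" "nn \<bullet> uu \<theta> = 0"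
  "vv \<theta> \<bullet> nn = 0" "nn \<bullet> vv \<theta> = 0" "uu \<theta> \<bullet> vv \<theta> = 0" "vv \<theta> \<bullet> uu \<theta> = 0" "vv \<theta> \<bullet> vv \<theta> = 1"
  unfolding uu_def vv_def
  by (simp_all add: inner_add_left inner_add_right algebra_simps power2_eq_square[symmetric])

lemma norm_nn_uu: "norm (a *\<^sub>R nn + b *\<^sub>R uu \<theta>) = sqrt (a^2 + b^2)"
  by (simp add: norm_eq_sqrt_inner inner_add_left inner_add_right power2_eq_square)

lemma expand: "x = C + ((x - C) \<bullet> e1) *\<^sub>R e1 + ((x - C) \<bullet> e2) *\<^sub>R e2 + ((x - C) \<bullet> nn) *\<^sub>R nn"
  using frame_expand[OF e11 e22 e12, of "x - C"] unfolding nn_def by (simp add: algebra_simps)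

lemma dist_C: "dist C (C + v) = norm v" "dist (C + v) C = norm v"
  by (simp_all add: dist_norm)

lemma Yc_circle: "Yc \<theta> \<in> circle3 C e1 e2 R"
proof -
  have "norm (R *\<^sub>R uu \<theta>) = R"
    using Rpos by (simp add: norm_eq_sqrt_inner)
  hence "dist C (Yc \<theta>) = R" unfolding Yc_def dist_C .
  moreover have "Yc \<theta> = C + (R * cos \<theta>) *\<^sub>R e1 + (R * sin \<theta>) *\<^sub>R e2"
    unfolding Yc_def uu_def by (simp add: algebra_simps)
  ultimately show ?thesis unfolding circle3_def plane3_def by blast
qed

lemma circle_Yc: assumes "Y \<in> circle3 C e1 e2 R" obtains \<theta> where "0 \<le> \<theta>" "\<theta> < 2*pi" "Y = Yc \<theta>"
proof -
  from assms obtain a b where Y: "Y = C + a *\<^sub>R e1 + b *\<^sub>R e2" and d: "dist C Y = R"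
    unfolding circle3_def plane3_def by auto
  have "(a *\<^sub>R e1 + b *\<^sub>R e2) \<bullet> (a *\<^sub>R e1 + b *\<^sub>R e2) = a^2 + b^2"
    by (simp add: inner_add_left inner_add_right power2_eq_square)
  moreover have "norm (a *\<^sub>R e1 + b *\<^sub>R e2) = R" using d unfolding Y add.assoc dist_C .
  ultimately have "a^2 + b^2 = R^2" by (simp add: norm_eq_sqrt_inner) (metis norm_eq_sqrt_inner power2_norm_eq_inner \<open>norm (a *\<^sub>R e1 + b *\<^sub>R e2) = R\<close>)
  hence "(a/R)^2 + (b/R)^2 = 1" using Rpos by (simp add: power_divide add_divide_distrib[symmetric])
  then obtain t where t: "0 \<le> t" "t < 2*pi" "a/R = cos t" "b/R = sin t" by (rule sincos_total_2pi)
  hence "a = R * cos t" "b = R * sin t" using Rpos by (simp_all add: field_simps)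
  hence "Y = Yc t" unfolding Y Yc_def uu_def by (simp add: algebra_simps)
  with t that show ?thesis by blast
qed

lemma DD_eq: "DD = (\<Union>\<theta>. TT \<theta>)"
proof
  show "DD \<subseteq> (\<Union>\<theta>. TT \<theta>)"
    unfolding DD_def dicone_def TT_def by (auto elim!: circle_Yc)
  show "(\<Union>\<theta>. TT \<theta>) \<subseteq> DD"
    unfolding DD_def dicone_def TT_def using Yc_circle by blast
qed

lemma TT_sub_DD: "TT \<theta> \<subseteq> DD" using DD_eq by blast

lemma mem_TT:
  assumes "0 \<le> t" "t \<le> 1" "0 \<le> w" "w \<le> 1"
  shows "GG t \<theta> w \<in> TT \<theta>"
proof -
  have e: "GG t \<theta> w = ((1-t)*(1-w)) *\<^sub>R O0 + ((1-t)*w) *\<^sub>R O1 + t *\<^sub>R Yc \<theta>"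
    unfolding GG_def HH_def O0_def O1_def Yc_def by (simp add: algebra_simps)
  have "0 \<le> (1-t)*(1-w)" "0 \<le> (1-t)*w" using assms by auto
  moreover have "(1-t)*(1-w) + (1-t)*w + t = 1"
    using assms by (auto intro!: mult_nonneg_nonneg simp: algebra_simps)
  ultimately show ?thesis using e assms unfolding TT_def convex_hull_3 by blast
qed

lemma TT_GG:
  assumes "x \<in> TT \<theta>" obtains t w where "0 \<le> t" "t \<le> 1" "0 \<le> w" "w \<le> 1" "x = GG t \<theta> w"
proof -
  from assms obtain a b c where abc: "0 \<le> a" "0 \<le> b" "0 \<le> c" "a + b + c = 1"
    "x = a *\<^sub>R O0 + b *\<^sub>R O1 + c *\<^sub>R Yc \<theta>"
    unfolding TT_def convex_hull_3 by auto
  define w where "w = (if a + b = 0 then 0 else b / (a + b))"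
  have w: "0 \<le> w" "w \<le> 1" using abc unfolding w_def by (auto simp: field_simps)
  have ab: "a = (1 - c) * (1 - w) \<and> b = (1 - c) * w"
  proof (cases "a + b = 0")
    case True thus ?thesis using abc unfolding w_def by auto
  next
    case False
    hence 1: "1 - c = a + b" and "w = b / (a + b)" using abc unfolding w_def by auto
    hence 2: "(a + b) * w = b" using False by simp
    have "(1 - c) * (1 - w) = (a + b) - (a + b) * w" unfolding 1 by (simp add: algebra_simps)
    moreover have "(1 - c) * w = (a + b) * w" unfolding 1 ..
    ultimately show ?thesis using 2 by simp
  qed
  have "x = GG c \<theta> w"
    unfolding abc(5) GG_def HH_def O0_def O1_def Yc_def ab[THEN conjunct1] ab[THEN conjunct2] by (simp add: algebra_simps)
  thus ?thesis using that w abc by auto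
qed

lemma HH_range:
  assumes "min h0 h1 \<le> H" "H \<le> max h0 h1" obtains w where "0 \<le> w" "w \<le> 1" "H = HH w"
proof -
  define w where "w = (H - h0) / (h1 - h0)"
  have "w * (h1 - h0) = H - h0" using hne unfolding w_def by simp
  hence "H = HH w" unfolding HH_def by (simp add: algebra_simps)
  moreover have "0 \<le> w" "w \<le> 1" using assms hne unfolding w_def
    by (cases "h0 < h1"; auto simp: field_simps)+
  ultimately show ?thesis using that by blast
qed

end




lemma minmax_aux: assumes "\<bar>H - (a+b)/2\<bar> \<le> d/2" "d = \<bar>b - a\<bar>"
  shows "min a b \<le> (H::real) \<and> H \<le> max a b"
proof -
  have 1: "H - (a+b)/2 \<le> d/2" "(a+b)/2 - H \<le> d/2" using assms(1) by linarith+
  hence 2: "2*H \<le> d + a + b" "a + b \<le> d + 2*H" by (simp_all add: field_simps)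
  show ?thesis
  proof (cases "a \<le> b")
    case True then have "d = b - a" using assms by simp
    thus ?thesis using True 2 unfolding min_def max_def by auto
  next
    case False then have "d = a - b" using assms by simp
    thus ?thesis using False 2 unfolding min_def max_def by auto
  qed
qed

lemma aux7: "a * 7 \<le> (dd::real) \<Longrightarrow> 0 \<le> a \<Longrightarrow> a \<le> dd / 2" by linarith

context dcone begin

definition "zc = (h0 + h1) / 2"
definition "cc = C + zc *\<^sub>R nn"
definition "Hm = \<bar>h0\<bar> + \<bar>h1\<bar>"
definition "dd = \<bar>h1 - h0\<bar>"
definition "del = dd * R / (8 * (R + Hm))"

lemma dd_pos: "0 < dd" using hne unfolding dd_def by simp
lemma Hm_pos: "0 < Hm" using h0nz unfolding Hm_def by simp
lemma dd_le: "dd \<le> Hm" unfolding dd_def Hm_def by simp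
lemma del_pos: "0 < del" using dd_pos Hm_pos Rpos unfolding del_def by simp

lemma sqrt_sum_sq_le: "sqrt (a^2 + b^2) \<le> \<bar>a\<bar> + \<bar>b\<bar>"
proof -
  have "a^2 + b^2 \<le> (\<bar>a\<bar> + \<bar>b\<bar>)^2" by (simp add: power2_eq_square algebra_simps)
  hence "sqrt (a^2 + b^2) \<le> sqrt ((\<bar>a\<bar> + \<bar>b\<bar>)^2)" by (rule real_sqrt_le_mono)
  thus ?thesis by simp
qed

lemma norm_nn_uu_le: "norm (a *\<^sub>R nn + b *\<^sub>R uu \<theta>) \<le> \<bar>a\<bar> + \<bar>b\<bar>"
  unfolding norm_nn_uu by (rule sqrt_sum_sq_le)

lemma cc_TT: "cc \<in> TT \<theta>"
proof -
  have "HH (1/2) = zc" unfolding HH_def zc_def by simp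
  hence "cc = GG 0 \<theta> (1/2)" unfolding cc_def GG_def by simp
  thus ?thesis using mem_TT[of 0 "1/2" \<theta>] by simp
qed

lemma polar_ex: obtains \<phi> where "a = sqrt (a^2 + b^2) * cos \<phi>" "b = sqrt (a^2 + b^2) * sin \<phi>"
proof (cases "a^2 + b^2 = 0")
  case True
  hence "a = 0" "b = 0" by (auto simp: add_nonneg_eq_0_iff)
  thus ?thesis using that[of 0] by simp
next
  case False
  define r where "r = sqrt (a^2 + b^2)"
  have r: "0 < r" using False unfolding r_def by (simp add: add_nonneg_nonneg sum_power2_gt_zero_iff)
  have "r^2 = a^2 + b^2" unfolding r_def by simp
  have "(a/r)^2 + (b/r)^2 = (a^2 + b^2) / r^2" by (simp add: power_divide add_divide_distrib)
  hence "(a/r)^2 + (b/r)^2 = 1" using False \<open>r^2 = a^2 + b^2\<close> by simp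
  then obtain t where "a/r = cos t" "b/r = sin t" by (rule sincos_total_2pi)
  hence "a = r * cos t" "b = r * sin t" using r by (simp_all add: field_simps)
  thus ?thesis using that unfolding r_def by blast
qed

lemma mem_DD_cyl:
  assumes "0 \<le> t" "t \<le> 1" "min h0 h1 \<le> H" "H \<le> max h0 h1"
  shows "C + ((1-t)*H) *\<^sub>R nn + (t*R) *\<^sub>R uu \<phi> \<in> DD"
proof -
  obtain w where w: "0 \<le> w" "w \<le> 1" "H = HH w" using HH_range assms(3,4) by blast
  have "GG t \<phi> w \<in> DD" using mem_TT[OF assms(1,2) w(1,2)] TT_sub_DD by blast
  thus ?thesis unfolding GG_def w(3) .
qed

lemma ball_DD: "ball cc del \<subseteq> DD"
proof
  fix x assume x: "x \<in> ball cc del"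
  define a1 where "a1 = (x - C) \<bullet> e1"
  define a2 where "a2 = (x - C) \<bullet> e2"
  define a3 where "a3 = (x - C) \<bullet> nn"
  have xe: "x = C + a1 *\<^sub>R e1 + a2 *\<^sub>R e2 + a3 *\<^sub>R nn"
    unfolding a1_def a2_def a3_def by (rule expand)
  define \<rho> where "\<rho> = sqrt (a1^2 + a2^2)"
  obtain \<phi> where \<phi>: "a1 = \<rho> * cos \<phi>" "a2 = \<rho> * sin \<phi>" unfolding \<rho>_def by (rule polar_ex)
  have x2: "x = C + a3 *\<^sub>R nn + \<rho> *\<^sub>R uu \<phi>"
    unfolding xe uu_def by (subst \<phi>(1), subst \<phi>(2)) (simp add: algebra_simps)
  have "x - cc = (a3 - zc) *\<^sub>R nn + \<rho> *\<^sub>R uu \<phi>"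
    unfolding x2 cc_def by (simp add: algebra_simps)
  hence nx: "norm (x - cc) = sqrt ((a3 - zc)^2 + \<rho>^2)" by (simp add: norm_nn_uu)
  have "norm (x - cc) < del" using x by (simp add: dist_norm norm_minus_commute)
  hence "sqrt ((a3 - zc)^2 + \<rho>^2) < del" using nx by simp
  moreover have "\<bar>a3 - zc\<bar> \<le> sqrt ((a3 - zc)^2 + \<rho>^2)" "\<rho> \<le> sqrt ((a3 - zc)^2 + \<rho>^2)"
    using real_sqrt_le_mono[of "(a3 - zc)^2" "(a3 - zc)^2 + \<rho>^2"]
          real_sqrt_le_mono[of "\<rho>^2" "(a3 - zc)^2 + \<rho>^2"] \<rho>_def by auto
  ultimately have b1: "\<bar>a3 - zc\<bar> < del" and b2: "\<rho> < del" by linarith+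
  have rho0: "0 \<le> \<rho>" unfolding \<rho>_def by simp
  define t where "t = \<rho> / R"
  have t0: "0 \<le> t" unfolding t_def using rho0 Rpos by simp
  have tdel: "t \<le> del / R" unfolding t_def using b2 Rpos by (simp add: divide_right_mono)
  have delR: "del / R = dd / (8 * (R + Hm))" unfolding del_def using Rpos by simp
  have "dd / (8 * (R + Hm)) \<le> 1/8" using dd_le Rpos Hm_pos by (simp add: field_simps)
  hence t8: "t \<le> 1/8" using tdel delR by linarith
  define H where "H = a3 / (1 - t)"
  have zc_bd: "\<bar>zc\<bar> \<le> Hm" unfolding zc_def Hm_def by simp
  have "del + t * Hm \<le> del + (del / R) * Hm" using mult_right_mono[OF tdel, of Hm] Hm_pos by simp
  also have "\<dots> = del * (R + Hm) / R" using Rpos by (simp add: field_simps)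
  also have "\<dots> = dd / 8"
  proof -
    have "R + Hm \<noteq> 0" "R \<noteq> 0" using Rpos Hm_pos by auto
    thus ?thesis unfolding del_def by (simp add: divide_simps)
  qed
  finally have key: "del + t * Hm \<le> dd / 8" .
  have "a3 - zc * (1 - t) = (a3 - zc) + t * zc" by (simp add: algebra_simps)
  hence "\<bar>a3 - zc * (1 - t)\<bar> \<le> \<bar>a3 - zc\<bar> + \<bar>t * zc\<bar>" by simp
  also have "\<bar>t * zc\<bar> = t * \<bar>zc\<bar>" using t0 by (simp add: abs_mult)
  also have "t * \<bar>zc\<bar> \<le> t * Hm" using zc_bd t0 by (simp add: mult_left_mono)
  finally have "\<bar>a3 - zc * (1 - t)\<bar> \<le> \<bar>a3 - zc\<bar> + t * Hm" by simp
  also have "\<dots> \<le> del + t * Hm" using b1 by simp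
  finally have num: "\<bar>a3 - zc * (1 - t)\<bar> \<le> dd / 8" using key by linarith
  have "H - zc = (a3 - zc * (1 - t)) / (1 - t)" unfolding H_def using t8 by (simp add: field_simps)
  hence "\<bar>H - zc\<bar> = \<bar>a3 - zc * (1 - t)\<bar> / (1 - t)" using t8 by simp
  also have "\<dots> \<le> (dd / 8) / (7/8)" using num t8 dd_pos
    by (intro frac_le) auto
  finally have "\<bar>H - zc\<bar> * 7 \<le> dd" by simp
  hence "\<bar>H - zc\<bar> \<le> dd / 2" using abs_ge_zero[of "H - zc"] aux7 by blast
  hence H1: "min h0 h1 \<le> H" "H \<le> max h0 h1" using minmax_aux[of H h0 h1 dd] unfolding zc_def dd_def by auto
  have "(1-t)*H = a3" unfolding H_def using t8 by simp
  moreover have "t*R = \<rho>" unfolding t_def using Rpos by simp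
  ultimately have "x = C + ((1-t)*H) *\<^sub>R nn + (t*R) *\<^sub>R uu \<phi>"
    unfolding x2 by simp
  thus "x \<in> DD" using mem_DD_cyl[OF t0 _ H1] t8 by simp
qed

end

locale dcone_f = dcone +
  fixes f :: "real^3 \<Rightarrow> real"
  assumes conv: "convex_fun_on DD f"
begin

lemma conv_seg:
  assumes "x \<in> DD" "y \<in> DD" "closed_segment x y \<subseteq> DD" "0 \<le> t" "t \<le> 1"
  shows "f ((1 - t) *\<^sub>R x + t *\<^sub>R y) \<le> (1 - t) * f x + t * f y"
  using conv assms unfolding convex_fun_on_def by blast

lemma conv_subset:
  assumes "convex S" "S \<subseteq> DD" shows "convex_on S f"
  unfolding convex_on_def
proof (intro conjI assms ballI allI impI)
  fix x y and u v :: real assume xy: "x \<in> S" "y \<in> S" and uv: "0 \<le> u" "0 \<le> v" "u + v = 1"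
  have "closed_segment x y \<subseteq> S" using xy assms closed_segment_subset by blast
  hence "f ((1 - v) *\<^sub>R x + v *\<^sub>R y) \<le> (1 - v) * f x + v * f y"
    using conv_seg[of x y v] xy assms uv by auto
  moreover have "u = 1 - v" using uv by simp
  ultimately show "f (u *\<^sub>R x + v *\<^sub>R y) \<le> u * f x + v * f y" by simp
qed

lemma lower_bound: obtains K where "\<And>x. x \<in> DD \<Longrightarrow> K \<le> f x"
proof -
  have "continuous_on (ball cc del) f"
    by (rule convex_on_continuous) (auto intro!: conv_subset ball_DD)
  hence "continuous_on (cball cc (del/2)) f"
    by (rule continuous_on_subset) (use del_pos in auto)
  hence "compact (f ` cball cc (del/2))" by (rule compact_continuous_image) simp
  then obtain M where M: "\<And>y. y \<in> cball cc (del/2) \<Longrightarrow> f y \<le> M"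
    using compact_attains_sup[of "f ` cball cc (del/2)"] del_pos by fastforce
  define B where "B = 2 * Hm + R"
  have Bpos: "0 < B" unfolding B_def using Hm_pos Rpos by simp
  define s where "s = del / (2 * B)"
  have spos: "0 < s" unfolding s_def using del_pos Bpos by simp
  define lam where "lam = s / (1 + s)"
  have lam: "0 < lam" "lam < 1" unfolding lam_def using spos by auto
  show ?thesis
  proof (rule that)
    fix x assume x: "x \<in> DD"
    then obtain \<theta> where "x \<in> TT \<theta>" using DD_eq by blast
    then obtain t w where tw: "0 \<le> t" "t \<le> 1" "0 \<le> w" "w \<le> 1" and xg: "x = GG t \<theta> w"
      by (rule TT_GG)
    have "x - cc = ((1-t) * HH w - zc) *\<^sub>R nn + (t*R) *\<^sub>R uu \<theta>"
      unfolding xg GG_def cc_def by (simp add: algebra_simps)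
    hence "norm (x - cc) \<le> \<bar>(1-t) * HH w - zc\<bar> + \<bar>t*R\<bar>"
      using norm_nn_uu_le by simp
    moreover have "\<bar>(1-t) * HH w - zc\<bar> \<le> 2 * Hm"
    proof -
      have "\<bar>HH w\<bar> \<le> \<bar>(1-w)*h0\<bar> + \<bar>w*h1\<bar>" unfolding HH_def by simp
      also have "\<dots> = (1-w)*\<bar>h0\<bar> + w*\<bar>h1\<bar>" using tw by (simp add: abs_mult)
      also have "\<dots> \<le> \<bar>h0\<bar> + \<bar>h1\<bar>" using tw
        by (intro add_mono) (auto simp: mult_left_le_one_le mult_le_cancel_right1)
      finally have hw: "\<bar>HH w\<bar> \<le> Hm" unfolding Hm_def .
      have "\<bar>(1-t) * HH w\<bar> = (1-t) * \<bar>HH w\<bar>" using tw by (simp add: abs_mult)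
      also have "\<dots> \<le> 1 * Hm" using tw hw by (intro mult_mono) auto
      finally have "\<bar>(1-t) * HH w\<bar> \<le> Hm" by simp
      moreover have "\<bar>zc\<bar> \<le> Hm" unfolding zc_def Hm_def by simp
      ultimately show ?thesis by linarith
    qed
    moreover have "\<bar>t*R\<bar> \<le> R" using tw Rpos by (simp add: abs_mult)
    ultimately have nB: "norm (x - cc) \<le> B" unfolding B_def by linarith
    define q where "q = cc - s *\<^sub>R (x - cc)"
    have "norm (q - cc) = s * norm (x - cc)" unfolding q_def using spos by simp
    also have "\<dots> \<le> s * B" using nB spos by (simp add: mult_left_mono)
    also have "\<dots> = del / 2" unfolding s_def using Bpos by simp
    finally have qc: "q \<in> cball cc (del/2)" by (simp add: dist_norm norm_minus_commute)
    hence qD: "q \<in> ball cc del" using del_pos by auto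
    have l1: "1 - lam = 1 / (1 + s)" unfolding lam_def using spos by (simp add: field_simps)
    have "q + s *\<^sub>R x = (1 + s) *\<^sub>R cc" unfolding q_def by (simp add: algebra_simps)
    hence e1: "(1 / (1 + s)) *\<^sub>R (q + s *\<^sub>R x) = cc" using spos by simp
    have "(1 - lam) *\<^sub>R q + lam *\<^sub>R x = (1 / (1 + s)) *\<^sub>R q + (s / (1 + s)) *\<^sub>R x"
      using l1 unfolding lam_def by simp
    also have "\<dots> = (1 / (1 + s)) *\<^sub>R (q + s *\<^sub>R x)" by (simp add: scaleR_add_right)
    finally have ccq: "cc = (1 - lam) *\<^sub>R q + lam *\<^sub>R x" using e1 by simp
    have ccseg: "cc \<in> closed_segment q x"
      unfolding closed_segment_def using ccq lam by auto
    have "closed_segment q cc \<subseteq> ball cc del"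
      by (rule closed_segment_subset) (use qD del_pos in auto)
    moreover have "closed_segment cc x \<subseteq> TT \<theta>"
      unfolding TT_def by (rule closed_segment_subset_convex_hull) (use cc_TT \<open>x \<in> TT \<theta>\<close> in \<open>auto simp: TT_def\<close>)
    ultimately have "closed_segment q x \<subseteq> DD"
      using Un_closed_segment[OF ccseg] ball_DD TT_sub_DD by blast
    hence "f cc \<le> (1 - lam) * f q + lam * f x"
      using conv_seg[of q x lam] qD ball_DD x lam ccq by auto
    also have "\<dots> \<le> (1 - lam) * M + lam * f x" using M[OF qc] lam by simp
    finally have "(f cc - (1 - lam) * M) / lam \<le> f x" using lam by (simp add: field_simps)
    thus "(f cc - (1 - lam) * M) / lam \<le> f x" .
  qed
qed

end




context dcone begin

definition "sl h = sqrt (R^2 + h^2)"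
definition "Ax = axis3 C e1 e2"

lemma sl_pos: "0 < sl h" unfolding sl_def using Rpos by (simp add: add_pos_nonneg)

lemma cross_uu_vv: "cross3 (uu \<theta>) (vv \<theta>) = nn" "cross3 nn (vv \<theta>) = - uu \<theta>"
proof -
  have s: "cross3 e2 e1 = - nn" "cross3 nn e1 = e2" "cross3 nn e2 = - e1"
    using cross_nn cross_skew[of e2 e1] cross_skew[of nn e1] cross_skew[of nn e2] by simp_all
  have "cross3 (uu \<theta>) (vv \<theta>) = (cos \<theta> * cos \<theta>) *\<^sub>R nn + (sin \<theta> * sin \<theta>) *\<^sub>R nn"
    unfolding uu_def vv_def
    by (simp add: cross_add_left cross_add_right cross_mult_left cross_mult_right cross_nn s Cross3.right_diff_distrib Cross3.left_diff_distrib)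
  also have "\<dots> = nn" by (simp add: scaleR_add_left[symmetric] power2_eq_square[symmetric])
  finally show "cross3 (uu \<theta>) (vv \<theta>) = nn" .
  show "cross3 nn (vv \<theta>) = - uu \<theta>"
    unfolding uu_def vv_def
    by (simp add: cross_add_left cross_add_right cross_mult_left cross_mult_right s Cross3.right_diff_distrib Cross3.left_diff_distrib)
qed

lemma cone_param_eq: "cone_param C e1 e2 R (C + h *\<^sub>R nn) = (\<lambda>(t, \<theta>). EE h t \<theta>)"
  unfolding cone_param_def circ_param_def EE_def uu_def
  by (rule ext) (auto simp: algebra_simps)

lemma EE_in_DD: "0 \<le> t \<Longrightarrow> t \<le> 1 \<Longrightarrow> EE h0 t \<theta> \<in> DD" "0 \<le> t \<Longrightarrow> t \<le> 1 \<Longrightarrow> EE h1 t \<theta> \<in> DD"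
proof -
  assume t: "0 \<le> t" "t \<le> 1"
  have "EE h0 t \<theta> = GG t \<theta> 0" "EE h1 t \<theta> = GG t \<theta> 1" unfolding EE_def GG_def HH_def by simp_all
  thus "EE h0 t \<theta> \<in> DD" "EE h1 t \<theta> \<in> DD" using mem_TT[OF t, of 0 \<theta>] mem_TT[OF t, of 1 \<theta>] TT_sub_DD by auto
qed

lemma dEE_t: "vector_derivative (\<lambda>s. EE h s \<theta>) (at t) = R *\<^sub>R uu \<theta> - h *\<^sub>R nn"
proof (rule vector_derivative_at)
  show "((\<lambda>s. EE h s \<theta>) has_vector_derivative R *\<^sub>R uu \<theta> - h *\<^sub>R nn) (at t)"
    unfolding EE_def has_vector_derivative_def
    by (auto intro!: derivative_eq_intros simp: algebra_simps)
qed

lemma dEE_th: "vector_derivative (\<lambda>s. EE h t s) (at \<theta>) = (t * R) *\<^sub>R vv \<theta>"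
proof (rule vector_derivative_at)
  show "((\<lambda>s. EE h t s) has_vector_derivative (t * R) *\<^sub>R vv \<theta>) (at \<theta>)"
    unfolding EE_def uu_def vv_def has_vector_derivative_def
    by (auto intro!: derivative_eq_intros simp: algebra_simps)
qed

lemma cross_norm_EE: "norm (cross3 (R *\<^sub>R uu \<theta> - h *\<^sub>R nn) ((t * R) *\<^sub>R vv \<theta>)) = \<bar>t\<bar> * R * sl h"
proof -
  have "cross3 (R *\<^sub>R uu \<theta> - h *\<^sub>R nn) ((t * R) *\<^sub>R vv \<theta>) = (t * R) *\<^sub>R (R *\<^sub>R nn + h *\<^sub>R uu \<theta>)"
    by (simp add: Cross3.left_diff_distrib cross_mult_left cross_mult_right cross_uu_vv scaleR_add_right)
  hence "norm (cross3 (R *\<^sub>R uu \<theta> - h *\<^sub>R nn) ((t * R) *\<^sub>R vv \<theta>)) = \<bar>t * R\<bar> * sqrt (R^2 + h^2)"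
    by (simp add: norm_nn_uu)
  thus ?thesis unfolding sl_def using Rpos by (simp add: abs_mult)
qed

lemma infdist_EE: assumes "0 \<le> t" shows "infdist (EE h t \<theta>) Ax = t * R"
proof -
  have ax: "Ax = {C + s *\<^sub>R nn | s. True}" unfolding Ax_def axis3_def nn_def ..
  have le: "dist (EE h t \<theta>) (C + s *\<^sub>R nn) \<ge> t * R" for s
  proof -
    have "EE h t \<theta> - (C + s *\<^sub>R nn) = ((1-t)*h - s) *\<^sub>R nn + (t*R) *\<^sub>R uu \<theta>"
      unfolding EE_def by (simp add: algebra_simps)
    hence "dist (EE h t \<theta>) (C + s *\<^sub>R nn) = sqrt (((1-t)*h - s)^2 + (t*R)^2)"
      by (simp add: dist_norm norm_nn_uu)
    also have "\<dots> \<ge> sqrt ((t*R)^2)" by (rule real_sqrt_le_mono) simp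
    finally show ?thesis using assms Rpos by simp
  qed
  have "infdist (EE h t \<theta>) Ax \<le> dist (EE h t \<theta>) (C + ((1-t)*h) *\<^sub>R nn)"
    by (rule infdist_le) (auto simp: ax)
  also have "\<dots> = t * R"
  proof -
    have "EE h t \<theta> - (C + ((1-t)*h) *\<^sub>R nn) = (t*R) *\<^sub>R uu \<theta>" unfolding EE_def by simp
    thus ?thesis using assms Rpos by (simp add: dist_norm norm_eq_sqrt_inner)
  qed
  finally have 1: "infdist (EE h t \<theta>) Ax \<le> t * R" .
  have "Ax \<noteq> {}" unfolding ax by auto
  hence "infdist (EE h t \<theta>) Ax = Inf (dist (EE h t \<theta>) ` Ax)" unfolding infdist_def by simp
  also have "\<dots> \<ge> t * R"
    by (rule cINF_greatest) (use \<open>Ax \<noteq> {}\<close> le ax in auto)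
  finally show ?thesis using 1 by simp
qed

lemma surf_density_EE:
  assumes "0 < t"
  shows "surf_density (cone_param C e1 e2 R (C + h *\<^sub>R nn)) (\<lambda>x. g x / infdist x Ax) (t, \<theta>)
          = sl h * g (EE h t \<theta>)"
proof -
  have "surf_density (cone_param C e1 e2 R (C + h *\<^sub>R nn)) (\<lambda>x. g x / infdist x Ax) (t, \<theta>)
      = g (EE h t \<theta>) / (t * R) * (\<bar>t\<bar> * R * sl h)"
    unfolding surf_density_def cone_param_eq
    using infdist_EE[of t h \<theta>] assms dEE_t[of h \<theta> t] dEE_th[of h t \<theta>] cross_norm_EE
    by simp
  thus ?thesis using assms Rpos by simp
qed

lemma surf_density_one:
  shows "surf_density (cone_param C e1 e2 R (C + h *\<^sub>R nn)) (\<lambda>x. 1) (t, \<theta>) = \<bar>t\<bar> * R * sl h"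
  unfolding surf_density_def cone_param_eq
  using dEE_t[of h \<theta> t] dEE_th[of h t \<theta>] cross_norm_EE by simp

lemma cone_dom_eq: "cone_dom = cbox 0 1 \<times> cbox 0 (2*pi)"
  unfolding cone_dom_def by (simp add: cbox_Pair_eq)

lemma box_cone_dom: fixes x :: "real \<times> real" assumes "x \<in> box (0,0) (1, 2*pi)" shows "0 < fst x"
proof -
  have "(1::real, 0::real) \<in> Basis" by (simp add: Basis_prod_def)
  with assms have "(0::real,0::real) \<bullet> (1,0) < x \<bullet> (1::real, 0::real)" unfolding mem_box by blast
  thus ?thesis by (cases x) (simp add: inner_prod_def)
qed

lemma area_cone: "surface_integral (cone_param C e1 e2 R (C + h *\<^sub>R nn)) cone_dom (\<lambda>x. 1) = pi * R * sl h"
proof -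
  have "((\<lambda>(t, \<theta>). t * R * sl h) has_integral pi * R * sl h) cone_dom"
  proof -
    have c: "continuous_on (cbox (0, 0) (1, 2 * pi)) (\<lambda>(t::real, \<theta>::real). t * R * sl h)"
      by (auto intro!: continuous_intros simp: split_beta)
    have "integral (cbox (0::real, 0::real) (1, 2 * pi)) (\<lambda>(t, \<theta>). t * R * sl h)
        = integral (cbox 0 1) (\<lambda>t. integral (cbox 0 (2*pi)) (\<lambda>\<theta>. t * R * sl h))"
      using integral_prod_continuous[OF c] by simp
    also have "\<dots> = integral {0..1} (\<lambda>t. t * (2 * pi * R * sl h))" by (simp add: mult_ac)
    also have "\<dots> = pi * R * sl h" using integral_ident[of 0 1]
      by (simp add: integral_mult_left)
    finally show ?thesis unfolding cone_dom_def
      using integrable_continuous[OF c] by (metis integrable_integral)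
  qed
  moreover have "surf_density (cone_param C e1 e2 R (C + h *\<^sub>R nn)) (\<lambda>x. 1) x = (\<lambda>(t, \<theta>). t * R * sl h) x"
    if "x \<in> box (0,0) (1, 2*pi)" for x
  proof -
    obtain t \<theta> where x: "x = (t, \<theta>)" by (cases x)
    have "0 < t" using box_cone_dom[OF that] x by simp
    thus ?thesis unfolding x surf_density_one by simp
  qed
  ultimately have "(surf_density (cone_param C e1 e2 R (C + h *\<^sub>R nn)) (\<lambda>x. 1) has_integral pi * R * sl h) cone_dom"
    unfolding cone_dom_def using has_integral_spike_interior_eq by blast
  thus ?thesis unfolding surface_integral_def by (rule integral_unique)
qed

lemma surf_int_g:
  assumes "surface_integrable (cone_param C e1 e2 R (C + h *\<^sub>R nn)) cone_dom (\<lambda>x. g x / infdist x Ax)"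
  shows "(\<lambda>(t, \<theta>). g (EE h t \<theta>)) integrable_on cone_dom"
    "surface_integral (cone_param C e1 e2 R (C + h *\<^sub>R nn)) cone_dom (\<lambda>x. g x / infdist x Ax)
       = sl h * integral cone_dom (\<lambda>(t, \<theta>). g (EE h t \<theta>))"
proof -
  define d where "d = surf_density (cone_param C e1 e2 R (C + h *\<^sub>R nn)) (\<lambda>x. g x / infdist x Ax)"
  define F where "F = (\<lambda>(t, \<theta>). g (EE h t \<theta>))"
  obtain I where I: "(d has_integral I) cone_dom" using assms unfolding surface_integrable_def d_def by blast
  have eq: "(d has_integral I) (cbox (0,0) (1, 2*pi)) = ((\<lambda>x. sl h * F x) has_integral I) (cbox (0,0) (1, 2*pi))"
  proof (rule has_integral_spike_interior_eq)
    fix x :: "real \<times> real" assume x0: "x \<in> box (0,0) (1, 2*pi)"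
    obtain t \<theta> where x: "x = (t, \<theta>)" by (cases x)
    have "0 < t" using box_cone_dom[OF x0] x by simp
    thus "sl h * F x = d x" unfolding x d_def F_def using surf_density_EE by simp
  qed
  have "((\<lambda>x. sl h * F x) has_integral I) cone_dom" using I eq unfolding cone_dom_def by simp
  hence "((\<lambda>x. (1 / sl h) * (sl h * F x)) has_integral (1 / sl h) * I) cone_dom"
    by (rule has_integral_mult_right)
  moreover have "(\<lambda>x. (1 / sl h) * (sl h * F x)) = F" using sl_pos[of h] by (simp add: fun_eq_iff)
  ultimately have J: "(F has_integral I / sl h) cone_dom" by simp
  thus "(\<lambda>(t, \<theta>). g (EE h t \<theta>)) integrable_on cone_dom" unfolding F_def by blast
  show "surface_integral (cone_param C e1 e2 R (C + h *\<^sub>R nn)) cone_dom (\<lambda>x. g x / infdist x Ax)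
       = sl h * integral cone_dom (\<lambda>(t, \<theta>). g (EE h t \<theta>))"
    unfolding surface_integral_def using integral_unique[OF I] integral_unique[OF J] sl_pos[of h]
    unfolding d_def F_def by simp
qed

end




context dcone begin

definition "Gv v = GG (v$1) (v$2) (v$3)"
definition "Gd v = (\<lambda>d::real^3. d$1 *\<^sub>R (R *\<^sub>R uu (v$2) - HH (v$3) *\<^sub>R nn) + d$2 *\<^sub>R ((v$1 * R) *\<^sub>R vv (v$2))
     + d$3 *\<^sub>R (((1 - v$1) * (h1 - h0)) *\<^sub>R nn))"
definition "Sdom = {v::real^3. 0 < v$1 \<and> v$1 < 1 \<and> 0 \<le> v$2 \<and> v$2 < 2*pi \<and> 0 \<le> v$3 \<and> v$3 \<le> 1}"
definition "Bx = (cbox (vector [0,0,0]) (vector [1, 2*pi, 1]) :: (real^3) set)"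

lemma Gv_deriv: "(Gv has_derivative Gd v) (at v within S)"
  unfolding Gv_def[abs_def] Gd_def GG_def HH_def uu_def vv_def
  by (auto intro!: derivative_eq_intros bounded_linear.has_derivative[OF bounded_linear_vec_nth]
           simp: algebra_simps fun_eq_iff)

lemma vv_cross_nn: "cross3 (vv \<theta>) nn = uu \<theta>"
  unfolding uu_def vv_def
  by (simp add: cross_add_left cross_mult_left cross_nn Cross3.left_diff_distrib)

lemma transpose_matrix3: "transpose (matrix (L :: real^3 \<Rightarrow> real^3)) = vector [L (axis 1 1), L (axis 2 1), L (axis 3 1)]"
  unfolding transpose_def matrix_def by (simp add: vec_eq_iff forall_3 vector_3)

lemma det_Gd: "det (matrix (Gd v)) = R * (v$1 * R) * ((1 - v$1) * (h1 - h0))"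
proof -
  have a1: "Gd v (axis 1 1) = R *\<^sub>R uu (v$2) - HH (v$3) *\<^sub>R nn"
    and a2: "Gd v (axis 2 1) = (v$1 * R) *\<^sub>R vv (v$2)"
    and a3: "Gd v (axis 3 1) = ((1 - v$1) * (h1 - h0)) *\<^sub>R nn"
    unfolding Gd_def by (simp_all add: axis_def)
  have "det (matrix (Gd v)) = det (transpose (matrix (Gd v)))" by (simp add: det_transpose)
  also have "\<dots> = Gd v (axis 1 1) \<bullet> cross3 (Gd v (axis 2 1)) (Gd v (axis 3 1))"
    unfolding transpose_matrix3 dot_cross_det ..
  also have "\<dots> = R * (v$1 * R) * ((1 - v$1) * (h1 - h0))"
    unfolding a1 a2 a3 by (simp add: cross_mult_left cross_mult_right vv_cross_nn inner_diff_left)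
  finally show ?thesis .
qed

lemma Sdom_lebesgue: "Sdom \<in> sets lebesgue"
proof -
  have "Sdom \<in> sets borel" unfolding Sdom_def by measurable
  thus ?thesis by simp
qed

lemma uu_eq: assumes "uu a = uu b" shows "cos a = cos b" "sin a = sin b"
proof -
  have "uu a \<bullet> e1 = uu b \<bullet> e1" "uu a \<bullet> e2 = uu b \<bullet> e2" using assms by simp_all
  thus "cos a = cos b" "sin a = sin b" unfolding uu_def by (simp_all add: inner_add_left)
qed

lemma HH_inj: "HH a = HH b \<Longrightarrow> a = b"
proof -
  assume "HH a = HH b"
  hence "(a - b) * (h1 - h0) = 0" unfolding HH_def by (simp add: algebra_simps)
  thus "a = b" using hne by simp
qed

lemma inj_Gv: "inj_on Gv Sdom"
proof (rule inj_onI)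
  fix x y assume x: "x \<in> Sdom" and y: "y \<in> Sdom" and e: "Gv x = Gv y"
  let ?a = "\<lambda>v::real^3. (1 - v$1) * HH (v$3)"
  have gv: "Gv v - C = ?a v *\<^sub>R nn + (v$1 * R) *\<^sub>R uu (v$2)" for v unfolding Gv_def GG_def by simp
  have "(Gv x - C) \<bullet> (Gv x - C) = (?a x)^2 + (x$1 * R)^2" for x
    unfolding gv by (simp add: inner_add_left inner_add_right power2_eq_square)
  have "(Gv v - C) \<bullet> nn = ?a v" for v unfolding gv by (simp add: inner_add_left)
  hence an: "?a x = ?a y" using e by metis
  have "norm ((x$1 * R) *\<^sub>R uu (x$2)) = norm ((y$1 * R) *\<^sub>R uu (y$2))"
  proof -
    have "(x$1 * R) *\<^sub>R uu (x$2) = (Gv x - C) - ?a x *\<^sub>R nn" unfolding gv by simp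
    also have "\<dots> = (y$1 * R) *\<^sub>R uu (y$2)" unfolding e an unfolding gv by simp
    finally show ?thesis by simp
  qed
  hence "\<bar>x$1 * R\<bar> = \<bar>y$1 * R\<bar>" by (simp add: norm_eq_sqrt_inner)
  hence t: "x$1 = y$1" using x y Rpos unfolding Sdom_def by (simp add: abs_mult)
  have "(x$1 * R) *\<^sub>R uu (x$2) = (y$1 * R) *\<^sub>R uu (y$2)"
  proof -
    have "(x$1 * R) *\<^sub>R uu (x$2) = (Gv x - C) - ?a x *\<^sub>R nn" unfolding gv by simp
    also have "\<dots> = (y$1 * R) *\<^sub>R uu (y$2)" unfolding e an unfolding gv by simp
    finally show ?thesis .
  qed
  hence "uu (x$2) = uu (y$2)" using t x Rpos unfolding Sdom_def by simp
  hence "sin (x$2) = sin (y$2) \<and> cos (x$2) = cos (y$2)" using uu_eq by blast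
  then obtain n :: int where n: "x$2 = y$2 + 2 * pi * n" using sin_cos_eq_iff by blast
  have "n = 0"
  proof -
    have b: "0 \<le> x$2" "x$2 < 2*pi" "0 \<le> y$2" "y$2 < 2*pi" using x y unfolding Sdom_def by auto
    have "- 2*pi < 2 * pi * n" "2 * pi * n < 2 * pi" using b n by linarith+
    hence "(2*pi) * (-1) < (2*pi) * real_of_int n" "(2*pi) * real_of_int n < (2*pi) * 1" by simp_all
    moreover have "0 < 2 * pi" by simp
    ultimately have "-1 < real_of_int n" "real_of_int n < 1"
      using mult_less_cancel_left_pos[of "2*pi" "-1" "real_of_int n"] mult_less_cancel_left_pos[of "2*pi" "real_of_int n" 1] by blast+
    thus ?thesis by linarith
  qed
  hence th: "x$2 = y$2" using n by simp
  have "HH (x$3) = HH (y$3)" using an t x unfolding Sdom_def by simp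
  hence w: "x$3 = y$3" by (rule HH_inj)
  show "x = y" using t th w by (simp add: vec_eq_iff forall_3)
qed


lemma cov_real:
  fixes \<phi> :: "real^3 \<Rightarrow> real"
  shows "(\<lambda>v. \<bar>det (matrix (Gd v))\<bar> * \<phi> (Gv v)) absolutely_integrable_on Sdom \<and>
           integral Sdom (\<lambda>v. \<bar>det (matrix (Gd v))\<bar> * \<phi> (Gv v)) = b
     \<longleftrightarrow> \<phi> absolutely_integrable_on (Gv ` Sdom) \<and> integral (Gv ` Sdom) \<phi> = b"
proof -
  have "(\<lambda>v. \<bar>det (matrix (Gd v))\<bar> *\<^sub>R vec (\<phi> (Gv v)) :: real^1) absolutely_integrable_on Sdom \<and>
           integral Sdom (\<lambda>v. \<bar>det (matrix (Gd v))\<bar> *\<^sub>R vec (\<phi> (Gv v))) = (vec b :: real^1)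
     \<longleftrightarrow> (\<lambda>x. vec (\<phi> x) :: real^1) absolutely_integrable_on (Gv ` Sdom) \<and>
           integral (Gv ` Sdom) (\<lambda>x. vec (\<phi> x)) = (vec b :: real^1)"
    by (rule has_absolute_integral_change_of_variables) (auto simp: Sdom_lebesgue Gv_deriv inj_Gv)
  thus ?thesis by (simp add: absolutely_integrable_on_1_iff integral_on_1_eq)
qed

definition "Nn = {x. e1 \<bullet> x = e1 \<bullet> C} \<union> {x. nn \<bullet> x = nn \<bullet> C}"

lemma negl_Nn: "negligible Nn"
proof -
  have "e1 \<noteq> 0"
  proof assume "e1 = 0" hence "e1 \<bullet> e1 = 0" by simp thus False using e11 by simp qed
  moreover have "nn \<noteq> 0"
  proof assume "nn = 0" hence "nn \<bullet> nn = 0" by simp thus False by simp qed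
  ultimately show ?thesis unfolding Nn_def by (intro negligible_Un negligible_hyperplane) auto
qed

lemma Gv_Sdom_DD: "Gv ` Sdom \<subseteq> DD"
proof
  fix x assume "x \<in> Gv ` Sdom"
  then obtain v where v: "v \<in> Sdom" "x = Gv v" by blast
  thus "x \<in> DD" using mem_TT[of "v$1" "v$3" "v$2"] TT_sub_DD unfolding Sdom_def Gv_def by auto
qed

lemma uu_mod: obtains \<theta>' where "0 \<le> \<theta>'" "\<theta>' < 2*pi" "uu \<theta>' = uu \<theta>"
proof -
  define n where "n = \<lfloor>\<theta> / (2*pi)\<rfloor>"
  define \<theta>' where "\<theta>' = \<theta> - 2*pi*n"
  have "real_of_int n \<le> \<theta> / (2*pi)" "\<theta> / (2*pi) < real_of_int n + 1" unfolding n_def by linarith+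
  hence "2*pi * real_of_int n \<le> \<theta>" "\<theta> < 2*pi * (real_of_int n + 1)"
    by (simp_all add: field_simps)
  hence r: "0 \<le> \<theta>'" "\<theta>' < 2*pi" unfolding \<theta>'_def by (simp_all add: algebra_simps)
  have "\<theta> = \<theta>' + 2*pi*n" unfolding \<theta>'_def by simp
  hence "sin \<theta> = sin \<theta>' \<and> cos \<theta> = cos \<theta>'" using sin_cos_eq_iff by blast
  hence "uu \<theta>' = uu \<theta>" unfolding uu_def by simp
  with r that show ?thesis by blast
qed

lemma DD_Gv: "DD \<subseteq> Gv ` Sdom \<union> Nn"
proof
  fix x assume "x \<in> DD"
  then obtain \<theta> where "x \<in> TT \<theta>" using DD_eq by blast
  then obtain t w where tw: "0 \<le> t" "t \<le> 1" "0 \<le> w" "w \<le> 1" "x = GG t \<theta> w" by (rule TT_GG)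
  obtain \<theta>' where th: "0 \<le> \<theta>'" "\<theta>' < 2*pi" "uu \<theta>' = uu \<theta>" by (rule uu_mod)
  have x: "x = GG t \<theta>' w" unfolding tw(5) GG_def th(3) ..
  show "x \<in> Gv ` Sdom \<union> Nn"
  proof (cases "t = 0 \<or> t = 1")
    case True
    hence "x \<in> Nn"
    proof
      assume "t = 0" thus ?thesis unfolding Nn_def x GG_def by (simp add: inner_add_right)
    next
      assume "t = 1" thus ?thesis unfolding Nn_def x GG_def by (simp add: inner_add_right)
    qed
    thus ?thesis by simp
  next
    case False
    hence "(vector [t, \<theta>', w] :: real^3) \<in> Sdom" using tw th unfolding Sdom_def by (auto simp: vector_3)
    moreover have "x = Gv (vector [t, \<theta>', w] :: real^3)" unfolding x Gv_def by (simp add: vector_3)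
    ultimately show ?thesis by blast
  qed
qed

lemma DD_transfer:
  fixes \<phi> :: "real^3 \<Rightarrow> real"
  shows "(\<phi> absolutely_integrable_on DD \<longleftrightarrow> \<phi> absolutely_integrable_on (Gv ` Sdom))"
  "integral DD \<phi> = integral (Gv ` Sdom) \<phi>"
proof -
  have neg: "negligible {x \<in> DD - Gv ` Sdom. \<phi> x \<noteq> 0}" "negligible {x \<in> Gv ` Sdom - DD. \<phi> x \<noteq> 0}"
    using DD_Gv Gv_Sdom_DD by (auto intro: negligible_subset[OF negl_Nn])
  show "(\<phi> absolutely_integrable_on DD \<longleftrightarrow> \<phi> absolutely_integrable_on (Gv ` Sdom))"
    by (rule absolutely_integrable_spike_set_eq[OF neg])
  show "integral DD \<phi> = integral (Gv ` Sdom) \<phi>"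
    by (rule integral_spike_set[OF neg])
qed

definition "kk = R^2 * \<bar>h1 - h0\<bar>"

lemma kk_pos: "0 < kk" unfolding kk_def using Rpos hne by simp

lemma det_abs: "0 \<le> v$1 \<Longrightarrow> v$1 \<le> 1 \<Longrightarrow> \<bar>det (matrix (Gd v))\<bar> = kk * (v$1 * (1 - v$1))"
  unfolding det_Gd kk_def using Rpos by (simp add: abs_mult power2_eq_square)

lemma Sdom_Bx: "Sdom \<subseteq> Bx" "Bx - Sdom \<subseteq> {v. axis 1 1 \<bullet> v = 0} \<union> {v. axis 1 1 \<bullet> v = 1} \<union> {v. axis 2 1 \<bullet> v = 2*pi}"
  unfolding Sdom_def Bx_def by (auto simp: mem_box_cart forall_3 vector_3 inner_axis')

lemma negl_Bx: "negligible (Bx - Sdom)"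
proof -
  have "(axis 1 1 :: real^3) \<noteq> 0" "(axis 2 1 :: real^3) \<noteq> 0" by (simp_all add: axis_eq_0_iff)
  hence "negligible ({v::real^3. axis 1 1 \<bullet> v = 0} \<union> {v. axis 1 1 \<bullet> v = 1} \<union> {v. axis 2 1 \<bullet> v = 2*pi})"
    by (intro negligible_Un negligible_hyperplane) auto
  thus ?thesis using Sdom_Bx(2) negligible_subset by blast
qed

lemma vol_main:
  fixes \<phi> :: "real^3 \<Rightarrow> real"
  assumes "\<phi> absolutely_integrable_on DD"
  shows "(\<lambda>v. kk * (v$1 * (1 - v$1)) * \<phi> (Gv v)) absolutely_integrable_on Bx"
    "integral DD \<phi> = integral Bx (\<lambda>v. kk * (v$1 * (1 - v$1)) * \<phi> (Gv v))"
proof -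
  have "\<phi> absolutely_integrable_on (Gv ` Sdom)" using assms DD_transfer(1) by blast
  hence c: "(\<lambda>v. \<bar>det (matrix (Gd v))\<bar> * \<phi> (Gv v)) absolutely_integrable_on Sdom \<and>
           integral Sdom (\<lambda>v. \<bar>det (matrix (Gd v))\<bar> * \<phi> (Gv v)) = integral (Gv ` Sdom) \<phi>"
    using cov_real by blast
  have eqS: "(\<lambda>v. \<bar>det (matrix (Gd v))\<bar> * \<phi> (Gv v)) v = (\<lambda>v. kk * (v$1 * (1 - v$1)) * \<phi> (Gv v)) v"
    if "v \<in> Sdom" for v using that det_abs[of v] unfolding Sdom_def by simp
  have c1: "(\<lambda>v. kk * (v$1 * (1 - v$1)) * \<phi> (Gv v)) absolutely_integrable_on Sdom"
    by (rule absolutely_integrable_spike[OF c[THEN conjunct1] negligible_empty]) (metis eqS DiffD1)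
  have c2: "integral Sdom (\<lambda>v. kk * (v$1 * (1 - v$1)) * \<phi> (Gv v)) = integral (Gv ` Sdom) \<phi>"
    using c integral_cong[of Sdom _ _, OF eqS] by simp
  have neg: "negligible {x \<in> Sdom - Bx. (\<lambda>v. kk * (v$1 * (1 - v$1)) * \<phi> (Gv v)) x \<noteq> 0}"
     "negligible {x \<in> Bx - Sdom. (\<lambda>v. kk * (v$1 * (1 - v$1)) * \<phi> (Gv v)) x \<noteq> 0}"
    using Sdom_Bx(1) negl_Bx by (auto intro: negligible_subset)
  show "(\<lambda>v. kk * (v$1 * (1 - v$1)) * \<phi> (Gv v)) absolutely_integrable_on Bx"
    using c1 absolutely_integrable_spike_set_eq[OF neg] by blast
  show "integral DD \<phi> = integral Bx (\<lambda>v. kk * (v$1 * (1 - v$1)) * \<phi> (Gv v))"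
    using c2 integral_spike_set[OF neg] DD_transfer(2) by simp
qed

end




lemma twiddle_abs:
  fixes F :: "'a::euclidean_space \<Rightarrow> real" and g :: "'b::euclidean_space \<Rightarrow> 'a"
  assumes hg: "\<And>x. h (g x) = x" and gh: "\<And>x. g (h x) = x"
    and contg: "\<And>x. continuous (at x) g"
    and gb: "\<And>u v. \<exists>w z. g ` cbox u v = cbox w z"
    and hb: "\<And>u v. \<exists>w z. h ` cbox u v = cbox w z"
    and r: "\<And>u v. Henstock_Kurzweil_Integration.content (g ` cbox u v) = Henstock_Kurzweil_Integration.content (cbox u v)"
    and F: "F absolutely_integrable_on cbox a b"
  shows "(\<lambda>x. F (g x)) absolutely_integrable_on (h ` cbox a b)"
    "integral (h ` cbox a b) (\<lambda>x. F (g x)) = integral (cbox a b) F"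
proof -
  have F1: "F integrable_on cbox a b" and F2: "(\<lambda>x. norm (F x)) integrable_on cbox a b"
    using F unfolding absolutely_integrable_on_def by auto
  have "((\<lambda>x. F (g x)) has_integral (1 / 1) *\<^sub>R integral (cbox a b) F) (h ` cbox a b)"
    by (rule has_integral_twiddle[where r=1]) (use assms F1 in auto)
  hence 1: "((\<lambda>x. F (g x)) has_integral integral (cbox a b) F) (h ` cbox a b)" by simp
  have "((\<lambda>x. norm (F (g x))) has_integral (1 / 1) *\<^sub>R integral (cbox a b) (\<lambda>x. norm (F x))) (h ` cbox a b)"
    by (rule has_integral_twiddle[where r=1 and f="\<lambda>x. norm (F x)"]) (use assms F2 in auto)
  hence 2: "(\<lambda>x. norm (F (g x))) integrable_on (h ` cbox a b)" by blast
  show "(\<lambda>x. F (g x)) absolutely_integrable_on (h ` cbox a b)"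
    unfolding absolutely_integrable_on_def using 1 2 by blast
  show "integral (h ` cbox a b) (\<lambda>x. F (g x)) = integral (cbox a b) F" using 1 by (rule integral_unique)
qed

lemma swap_abs:
  fixes F :: "('a::euclidean_space \<times> 'b::euclidean_space) \<Rightarrow> real"
  assumes "F absolutely_integrable_on cbox (a, c) (b, d)"
  shows "(\<lambda>(y, x). F (x, y)) absolutely_integrable_on cbox (c, a) (d, b)"
    "integral (cbox (c, a) (d, b)) (\<lambda>(y, x). F (x, y)) = integral (cbox (a, c) (b, d)) F"
proof -
  have e: "prod.swap ` cbox (a, c) (b, d) = cbox (c, a) (d, b)" by simp
  have s: "(\<lambda>(y, x). F (x, y)) = (\<lambda>p. F (prod.swap p))" by (auto simp: fun_eq_iff)
  have c: "Henstock_Kurzweil_Integration.content (prod.swap ` cbox u v) = Henstock_Kurzweil_Integration.content (cbox u v)" for u v :: "'b \<times> 'a"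
    by (metis content_Pair mult.commute old.prod.exhaust swap_cbox_Pair)
  have b: "\<exists>w z. prod.swap ` cbox u v = cbox w z" for u v :: "'x::euclidean_space \<times> 'y::euclidean_space"
    by (metis prod.exhaust swap_cbox_Pair)
  note t = twiddle_abs[where h=prod.swap and g=prod.swap and F=F and a="(a,c)" and b="(b,d)", OF _ _ _ b b c assms]
  show "(\<lambda>(y, x). F (x, y)) absolutely_integrable_on cbox (c, a) (d, b)"
    using t(1) unfolding s e by (simp add: isCont_swap)
  show "integral (cbox (c, a) (d, b)) (\<lambda>(y, x). F (x, y)) = integral (cbox (a, c) (b, d)) F"
    using t(2) unfolding s e by (simp add: isCont_swap)
qed

lemma fubini_abs:
  fixes F :: "('a::euclidean_space \<times> 'b::euclidean_space) \<Rightarrow> real"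
  assumes F: "F absolutely_integrable_on (A \<times> B)"
  shows "AE x in lebesgue. x \<in> A \<longrightarrow> (\<lambda>y. F (x, y)) absolutely_integrable_on B"
    "(\<lambda>x. integral B (\<lambda>y. F (x, y))) absolutely_integrable_on A"
    "integral (A \<times> B) F = integral A (\<lambda>x. integral B (\<lambda>y. F (x, y)))"
proof -
  define G where "G p = indicator (A \<times> B) p * F p" for p
  have Gint: "integrable lebesgue G" using F unfolding set_integrable_def G_def by simp
  hence Gm: "G \<in> borel_measurable lebesgue" by (rule borel_measurable_integrable)
  obtain G' where G'm: "G' \<in> borel_measurable lborel" and ae: "AE p in lborel. G p = G' p"
    using completion_ex_borel_measurable_real[OF Gm] by blast
  have aeL: "AE p in lebesgue. G p = G' p" using ae by (rule AE_completion)
  have G'mL: "G' \<in> borel_measurable lebesgue" using G'm by (rule measurable_completion)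
  have "integrable lebesgue G'" by (rule integrable_cong_AE_imp[OF Gint G'mL aeL])
  hence G'int: "integrable lborel G'" using integrable_completion[OF G'm] by simp
  have intGG': "integral\<^sup>L lebesgue G = integral\<^sup>L lborel G'"
    using integral_cong_AE[OF Gm G'mL aeL] integral_completion[OF G'm] by simp
  have G'intP: "integrable (lborel \<Otimes>\<^sub>M lborel) G'" using G'int by (simp add: lborel_prod)
  have G'mP: "G' \<in> borel_measurable (lborel \<Otimes>\<^sub>M lborel)" using G'm by (simp add: lborel_prod)
  have aeP: "AE p in lborel \<Otimes>\<^sub>M lborel. G p = G' p" unfolding lborel_prod by (rule ae)
  have ae1: "AE x in lborel. AE y in lborel. G (x, y) = G' (x, y)"
    using lborel_pair.AE_pair[OF aeP] by simp
  have ae2: "AE x in lborel. integrable lborel (\<lambda>y. G' (x, y))"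
    using lborel_pair.AE_integrable_fst'[OF G'intP] .
  define H where "H x = (LINT y|lborel. G' (x, y))" for x
  have Hint: "integrable lborel H" unfolding H_def using lborel_pair.integrable_fst'[OF G'intP] .
  have Hm: "H \<in> borel_measurable lborel" using Hint by (rule borel_measurable_integrable)
  have Hsum: "integral\<^sup>L lborel H = integral\<^sup>L lborel G'"
    unfolding H_def using lborel_pair.integral_fst'[OF G'intP] by (simp add: lborel_prod)
  have key: "AE x in lborel. (x \<in> A \<longrightarrow> (\<lambda>y. F (x, y)) absolutely_integrable_on B) \<and>
               indicator A x * integral B (\<lambda>y. F (x, y)) = H x"
    using ae1 ae2
  proof eventually_elim
    case (elim x)
    have sm: "(\<lambda>y. G' (x, y)) \<in> borel_measurable lborel" using measurable_Pair2[OF G'mP] by simp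
    hence smL: "(\<lambda>y. G' (x, y)) \<in> borel_measurable lebesgue" by (rule measurable_completion)
    have aey: "AE y in lebesgue. G' (x, y) = G (x, y)" using elim(1) by (auto intro: AE_completion elim: AE_mp)
    have Gsm: "(\<lambda>y. G (x, y)) \<in> borel_measurable lebesgue" by (rule borel_measurable_AE[OF smL aey])
    have "integrable lebesgue (\<lambda>y. G' (x, y))" using elim(2) integrable_completion[OF sm] by simp
    hence GintS: "integrable lebesgue (\<lambda>y. G (x, y))" by (rule integrable_cong_AE_imp[OF _ Gsm aey])
    have IGS: "(LINT y|lebesgue. G (x, y)) = H x"
    proof -
      have "AE y in lebesgue. G (x, y) = G' (x, y)" using aey by (auto elim: AE_mp)
      hence "(LINT y|lebesgue. G (x, y)) = (LINT y|lebesgue. G' (x, y))" by (rule integral_cong_AE[OF Gsm smL])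
      also have "\<dots> = (LINT y|lborel. G' (x, y))" by (rule integral_completion[OF sm])
      finally show ?thesis unfolding H_def .
    qed
    show ?case
    proof (cases "x \<in> A")
      case True
      have GS: "G (x, y) = indicator B y * F (x, y)" for y unfolding G_def using True by (simp add: indicator_def)
      have ai: "(\<lambda>y. F (x, y)) absolutely_integrable_on B"
        using GintS unfolding set_integrable_def GS by simp
      have "integral B (\<lambda>y. F (x, y)) = (LINT y|lebesgue. G (x, y))"
        using set_lebesgue_integral_eq_integral(2)[OF ai] unfolding set_lebesgue_integral_def GS by simp
      thus ?thesis using True ai IGS by simp
    next
      case False
      have "G (x, y) = 0" for y unfolding G_def using False by simp
      thus ?thesis using False IGS by simp
    qed
  qed
  have keyL: "AE x in lebesgue. indicator A x * integral B (\<lambda>y. F (x, y)) = H x"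
    using AE_completion[OF key] by (auto elim: AE_mp)
  show "AE x in lebesgue. x \<in> A \<longrightarrow> (\<lambda>y. F (x, y)) absolutely_integrable_on B"
    using AE_completion[OF key] by (auto elim: AE_mp)
  have HmL: "H \<in> borel_measurable lebesgue" using Hm by (rule measurable_completion)
  have HintL: "integrable lebesgue H" using Hint integrable_completion[OF Hm] by simp
  have aeH: "AE x in lebesgue. H x = indicator A x * integral B (\<lambda>y. F (x, y))" using keyL by (auto elim: AE_mp)
  have Im: "(\<lambda>x. indicator A x * integral B (\<lambda>y. F (x, y))) \<in> borel_measurable lebesgue"
    by (rule borel_measurable_AE[OF HmL aeH])
  have Iint: "integrable lebesgue (\<lambda>x. indicator A x * integral B (\<lambda>y. F (x, y)))"
    by (rule integrable_cong_AE_imp[OF HintL Im aeH])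
  show ai2: "(\<lambda>x. integral B (\<lambda>y. F (x, y))) absolutely_integrable_on A"
    using Iint unfolding set_integrable_def by simp
  have "integral A (\<lambda>x. integral B (\<lambda>y. F (x, y))) = (LINT x|lebesgue. indicator A x * integral B (\<lambda>y. F (x, y)))"
    using set_lebesgue_integral_eq_integral(2)[OF ai2] unfolding set_lebesgue_integral_def by simp
  also have "\<dots> = (LINT x|lebesgue. H x)" using integral_cong_AE[OF Im HmL keyL] .
  also have "\<dots> = integral\<^sup>L lborel H" using integral_completion[OF Hm] .
  also have "\<dots> = integral\<^sup>L lebesgue G" using Hsum intGG' by simp
  also have "\<dots> = integral (A \<times> B) F"
    using set_lebesgue_integral_eq_integral(2)[OF F] unfolding set_lebesgue_integral_def G_def by simp
  finally show "integral (A \<times> B) F = integral A (\<lambda>x. integral B (\<lambda>y. F (x, y)))" by simp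
qed
lemma ftc_poly:
  "((\<lambda>t::real. 1 - 6*t + 6*t^2) has_integral 0) {0..1}"
  "((\<lambda>t::real. t * (1 - 6*t + 6*t^2)) has_integral 0) {0..1}"
proof -
  have "((\<lambda>t::real. 1 - 6*t + 6*t^2) has_integral ((\<lambda>t. t - 3*t^2 + 2*t^3) 1 - (\<lambda>t. t - 3*t^2 + 2*t^3) 0)) {0..1}"
    by (rule fundamental_theorem_of_calculus)
       (auto intro!: derivative_eq_intros simp: has_real_derivative_iff_has_vector_derivative[symmetric] algebra_simps power2_eq_square)
  thus "((\<lambda>t::real. 1 - 6*t + 6*t^2) has_integral 0) {0..1}" by simp
  have "((\<lambda>t::real. t * (1 - 6*t + 6*t^2)) has_integral ((\<lambda>t. t^2/2 - 2*t^3 + 3/2*t^4) 1 - (\<lambda>t. t^2/2 - 2*t^3 + 3/2*t^4) 0)) {0..1}"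
    by (rule fundamental_theorem_of_calculus)
       (auto intro!: derivative_eq_intros simp: has_real_derivative_iff_has_vector_derivative[symmetric] algebra_simps power2_eq_square power3_eq_cube)
  thus "((\<lambda>t::real. t * (1 - 6*t + 6*t^2)) has_integral 0) {0..1}" by simp
qed

lemma conv_order_1d:
  fixes \<phi> :: "real \<Rightarrow> real"
  assumes conv: "\<And>x y l. x \<in> {0..1} \<Longrightarrow> y \<in> {0..1} \<Longrightarrow> 0 \<le> l \<Longrightarrow> l \<le> 1 \<Longrightarrow>
                    \<phi> ((1-l)*x + l*y) \<le> (1-l) * \<phi> x + l * \<phi> y"
    and int: "(\<lambda>t. (1 - 6*t + 6*t^2) * \<phi> t) integrable_on {0..1}"
  shows "0 \<le> integral {0..1} (\<lambda>t. (1 - 6*t + 6*t^2) * \<phi> t)"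
proof -
  define s where "s = sqrt (3::real)"
  have s2: "s * s = 3" unfolding s_def by simp
  have "sqrt (3::real) < sqrt (3^2)" by (rule real_sqrt_less_mono) simp
  hence s0: "0 < s" "s < 3" unfolding s_def by simp_all
  define t0 where "t0 = (3 - s) / 6"
  define t1 where "t1 = (3 + s) / 6"
  have tt: "0 < t0" "t0 < t1" "t1 < 1" using s0 unfolding t0_def t1_def by auto
  define k where "k t = 1 - 6*t + 6*t^2" for t :: real
  have sum: "t0 + t1 = 1" unfolding t0_def t1_def by (simp add: field_simps)
  have prod: "t0 * t1 = 1/6" unfolding t0_def t1_def using s2 by (simp add: field_simps algebra_simps)
  have kf: "k t = 6 * (t - t0) * (t - t1)" for t
  proof -
    have "6 * (t - t0) * (t - t1) = 6 * t^2 - 6 * t * (t0 + t1) + 6 * (t0 * t1)" by (simp add: algebra_simps power2_eq_square)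
    thus ?thesis unfolding sum prod k_def by simp
  qed
  define m where "m = (\<phi> t1 - \<phi> t0) / (t1 - t0)"
  define lin where "lin t = \<phi> t0 + m * (t - t0)" for t
  have lm: "(t1 - t0) * lin t = (t1 - t) * \<phi> t0 + (t - t0) * \<phi> t1" for t
  proof -
    have "(t1 - t0) * m = \<phi> t1 - \<phi> t0" unfolding m_def using tt by simp
    moreover have "(t1 - t0) * lin t = (t1 - t0) * \<phi> t0 + ((t1 - t0) * m) * (t - t0)"
      unfolding lin_def by (simp only: distrib_left mult.assoc)
    ultimately have "(t1 - t0) * lin t = (t1 - t0) * \<phi> t0 + (\<phi> t1 - \<phi> t0) * (t - t0)" by simp
    thus ?thesis by (simp add: algebra_simps)
  qed
  have pw: "0 \<le> (\<phi> t - lin t) * k t" if t: "t \<in> {0..1}" for t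
  proof -
    have tin: "t0 \<in> {0..1}" "t1 \<in> {0..1}" using tt by auto
    consider "t < t0" | "t0 \<le> t" "t \<le> t1" | "t1 < t" by linarith
    thus ?thesis
    proof cases
      case 1
      define l where "l = (t0 - t) / (t1 - t)"
      have d: "t1 - t \<noteq> 0" using 1 tt by simp
      have l: "0 \<le> l" "l \<le> 1" using 1 tt unfolding l_def by auto
      have li: "l * (t1 - t) = t0 - t" unfolding l_def using d by simp
      have "(1-l)*t + l*t1 = t + l * (t1 - t)" by (simp add: algebra_simps)
      hence "(1-l)*t + l*t1 = t0" unfolding li by simp
      hence "\<phi> t0 \<le> (1-l) * \<phi> t + l * \<phi> t1" using conv[OF t tin(2) l] by simp
      hence "(t1 - t) * \<phi> t0 \<le> (t1 - t) * ((1-l) * \<phi> t + l * \<phi> t1)" using 1 tt by simp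
      also have "\<dots> = (t1 - t) * \<phi> t + (l * (t1 - t)) * (\<phi> t1 - \<phi> t)" by (simp add: algebra_simps)
      also have "\<dots> = (t1 - t0) * \<phi> t + (t0 - t) * \<phi> t1" unfolding li by (simp add: algebra_simps)
      finally have "0 \<le> (t1 - t0) * (\<phi> t - lin t)" unfolding right_diff_distrib lm by (simp add: algebra_simps)
      hence "0 \<le> \<phi> t - lin t" using tt by (simp add: zero_le_mult_iff)
      moreover have "0 \<le> k t" unfolding kf using 1 tt by (simp add: zero_le_mult_iff)
      ultimately show ?thesis by simp
    next
      case 2
      define l where "l = (t - t0) / (t1 - t0)"
      have d: "t1 - t0 \<noteq> 0" using tt by simp
      have l: "0 \<le> l" "l \<le> 1" using 2 tt unfolding l_def by auto
      have li: "l * (t1 - t0) = t - t0" unfolding l_def using d by simp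
      have "(1-l)*t0 + l*t1 = t0 + l * (t1 - t0)" by (simp add: algebra_simps)
      hence "(1-l)*t0 + l*t1 = t" unfolding li by simp
      hence "\<phi> t \<le> (1-l) * \<phi> t0 + l * \<phi> t1" using conv[OF tin(1) tin(2) l] by simp
      also have "\<dots> = lin t"
      proof -
        have "m * (t - t0) = l * (\<phi> t1 - \<phi> t0)" unfolding m_def l_def by simp
        thus ?thesis unfolding lin_def by (simp add: algebra_simps)
      qed
      finally have "\<phi> t - lin t \<le> 0" by simp
      moreover have "k t \<le> 0" unfolding kf using 2 tt by (simp add: mult_nonneg_nonpos)
      ultimately show ?thesis by (simp add: zero_le_mult_iff)
    next
      case 3
      define l where "l = (t1 - t0) / (t - t0)"
      have d: "t - t0 \<noteq> 0" using 3 tt by simp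
      have l: "0 \<le> l" "l \<le> 1" using 3 tt unfolding l_def by auto
      have li: "l * (t - t0) = t1 - t0" unfolding l_def using d by simp
      have "(1-l)*t0 + l*t = t0 + l * (t - t0)" by (simp add: algebra_simps)
      hence "(1-l)*t0 + l*t = t1" unfolding li by simp
      hence "\<phi> t1 \<le> (1-l) * \<phi> t0 + l * \<phi> t" using conv[OF tin(1) t l] by simp
      hence "(t - t0) * \<phi> t1 \<le> (t - t0) * ((1-l) * \<phi> t0 + l * \<phi> t)" using 3 tt by simp
      also have "\<dots> = (t - t0) * \<phi> t0 + (l * (t - t0)) * (\<phi> t - \<phi> t0)" by (simp add: algebra_simps)
      also have "\<dots> = (t - t1) * \<phi> t0 + (t1 - t0) * \<phi> t" unfolding li by (simp add: algebra_simps)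
      finally have "0 \<le> (t1 - t0) * (\<phi> t - lin t)" unfolding right_diff_distrib lm by (simp add: algebra_simps)
      hence "0 \<le> \<phi> t - lin t" using tt by (simp add: zero_le_mult_iff)
      moreover have "0 \<le> k t" unfolding kf using 3 tt by (simp add: zero_le_mult_iff)
      ultimately show ?thesis by simp
    qed
  qed
  have lk: "((\<lambda>t. lin t * k t) has_integral 0) {0..1}"
  proof -
    have e: "lin t * k t = (\<phi> t0 - m * t0) * k t + m * (t * k t)" for t
      unfolding lin_def by (simp add: algebra_simps)
    have "((\<lambda>t. (\<phi> t0 - m * t0) * k t + m * (t * k t)) has_integral ((\<phi> t0 - m * t0) * 0 + m * 0)) {0..1}"
      using ftc_poly unfolding k_def by (intro has_integral_add has_integral_mult_right) auto
    thus ?thesis unfolding e by simp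
  qed
  have int1: "(\<lambda>t. k t * \<phi> t) integrable_on {0..1}" using int unfolding k_def .
  have "integral {0..1} (\<lambda>t. k t * \<phi> t) = integral {0..1} (\<lambda>t. (\<phi> t - lin t) * k t) + integral {0..1} (\<lambda>t. lin t * k t)"
  proof -
    have "(\<lambda>t. (\<phi> t - lin t) * k t) integrable_on {0..1}"
    proof -
      have "(\<lambda>t. k t * \<phi> t - lin t * k t) integrable_on {0..1}" using int1 lk by (intro integrable_diff) auto
      thus ?thesis by (simp add: algebra_simps)
    qed
    hence "integral {0..1} (\<lambda>t. (\<phi> t - lin t) * k t + lin t * k t) = integral {0..1} (\<lambda>t. (\<phi> t - lin t) * k t) + integral {0..1} (\<lambda>t. lin t * k t)"
      using lk by (intro integral_add) auto
    thus ?thesis by (simp add: algebra_simps)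
  qed
  also have "\<dots> \<ge> 0"
  proof -
    have "(\<lambda>t. (\<phi> t - lin t) * k t) integrable_on {0..1}"
    proof -
      have "(\<lambda>t. k t * \<phi> t - lin t * k t) integrable_on {0..1}" using int1 lk by (intro integrable_diff) auto
      thus ?thesis by (simp add: algebra_simps)
    qed
    hence "0 \<le> integral {0..1} (\<lambda>t. (\<phi> t - lin t) * k t)" using pw by (intro integral_nonneg) auto
    thus ?thesis using integral_unique[OF lk] by simp
  qed
  finally show ?thesis unfolding k_def by simp
qed
lemma borel_version:
  fixes g :: "'a::euclidean_space \<Rightarrow> real"
  assumes "integrable lebesgue g"
  obtains g' where "g' \<in> borel_measurable lborel" "AE x in lborel. g x = g' x" "integrable lborel g'"
    "integral\<^sup>L lebesgue g = integral\<^sup>L lborel g'"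
proof -
  have gm: "g \<in> borel_measurable lebesgue" using assms by (rule borel_measurable_integrable)
  obtain g' where g'm: "g' \<in> borel_measurable lborel" and ae: "AE x in lborel. g x = g' x"
    using completion_ex_borel_measurable_real[OF gm] by blast
  have aeL: "AE x in lebesgue. g x = g' x" using ae by (rule AE_completion)
  have g'mL: "g' \<in> borel_measurable lebesgue" using g'm by (rule measurable_completion)
  have "integrable lebesgue g'" by (rule integrable_cong_AE_imp[OF assms g'mL aeL])
  hence "integrable lborel g'" using integrable_completion[OF g'm] by simp
  moreover have "integral\<^sup>L lebesgue g = integral\<^sup>L lborel g'"
    using integral_cong_AE[OF gm g'mL aeL] integral_completion[OF g'm] by simp
  ultimately show ?thesis using that g'm ae by blast
qed

lemma prod_abs:
  fixes a :: "'a::euclidean_space \<Rightarrow> real" and b :: "'b::euclidean_space \<Rightarrow> real"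
  assumes a: "a absolutely_integrable_on A" and b: "b absolutely_integrable_on B"
  shows "(\<lambda>p. a (fst p) * b (snd p)) absolutely_integrable_on (A \<times> B)"
proof -
  define a0 where "a0 x = indicator A x * a x" for x
  define b0 where "b0 y = indicator B y * b y" for y
  have a0i: "integrable lebesgue a0" using a unfolding set_integrable_def a0_def by simp
  have b0i: "integrable lebesgue b0" using b unfolding set_integrable_def b0_def by simp
  obtain a' where a'm: "a' \<in> borel_measurable lborel" and aea: "AE x in lborel. a0 x = a' x"
    and a'i: "integrable lborel a'" by (rule borel_version[OF a0i])
  obtain b' where b'm: "b' \<in> borel_measurable lborel" and aeb: "AE x in lborel. b0 x = b' x"
    and b'i: "integrable lborel b'" by (rule borel_version[OF b0i])
  define P where "P p = a' (fst p) * b' (snd p)" for p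
  note [measurable] = a'm b'm
  have Pm: "P \<in> borel_measurable (lborel \<Otimes>\<^sub>M lborel)" unfolding P_def by measurable
  have "integrable (lborel \<Otimes>\<^sub>M lborel) P"
  proof (rule lborel_pair.Fubini_integrable[OF Pm])
    have "(LBINT y. norm (P (x, y))) = norm (a' x) * (LBINT y. norm (b' y))" for x
      unfolding P_def by (simp add: abs_mult)
    thus "integrable lborel (\<lambda>x. LBINT y. norm (P (x, y)))"
      using a'i by (simp add: integrable_norm)
    show "AE x in lborel. integrable lborel (\<lambda>y. P (x, y))"
      unfolding P_def using b'i by simp
  qed
  hence Pi: "integrable lborel P" by (simp add: lborel_prod)
  from aea obtain N1 where N1: "{x \<in> space lborel. \<not> a0 x = a' x} \<subseteq> N1" "emeasure lborel N1 = 0" "N1 \<in> sets lborel"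
    by (rule AE_E)
  from aeb obtain N2 where N2: "{x \<in> space lborel. \<not> b0 x = b' x} \<subseteq> N2" "emeasure lborel N2 = 0" "N2 \<in> sets lborel"
    by (rule AE_E)
  have n1: "N1 \<times> UNIV \<in> null_sets (lborel \<Otimes>\<^sub>M lborel)"
    using N1 lborel.emeasure_pair_measure_Times[of N1 lborel UNIV] by (auto simp: null_sets_def)
  have n2: "UNIV \<times> N2 \<in> null_sets (lborel \<Otimes>\<^sub>M lborel)"
    using N2 lborel.emeasure_pair_measure_Times[of UNIV lborel N2] by (auto simp: null_sets_def)
  have "AE p in lborel \<Otimes>\<^sub>M lborel. indicator (A \<times> B) p * (a (fst p) * b (snd p)) = P p"
  proof (rule AE_I'[OF null_sets.Un[OF n1 n2]])
    show "{p \<in> space (lborel \<Otimes>\<^sub>M lborel). \<not> indicator (A \<times> B) p * (a (fst p) * b (snd p)) = P p} \<subseteq> N1 \<times> UNIV \<union> UNIV \<times> N2"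
    proof (clarsimp)
      fix x y assume ne: "indicator (A \<times> B) (x, y) * (a x * b y) \<noteq> P (x, y)" and "y \<notin> N2"
      hence "b0 y = b' y" using N2 by auto
      moreover have "indicator (A \<times> B) (x, y) * (a x * b y) = a0 x * b0 y"
        unfolding a0_def b0_def by (simp add: indicator_times)
      ultimately have "a0 x \<noteq> a' x" using ne unfolding P_def by auto
      thus "x \<in> N1" using N1 by auto
    qed
  qed
  hence "AE p in lborel. indicator (A \<times> B) p * (a (fst p) * b (snd p)) = P p"
    unfolding lborel_prod .
  hence ae: "AE p in lebesgue. P p = indicator (A \<times> B) p * (a (fst p) * b (snd p))"
    by (intro AE_completion) (auto elim: AE_mp)
  have PmL: "P \<in> borel_measurable lebesgue" using Pm by (simp add: lborel_prod measurable_completion)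
  have Pil: "integrable lebesgue P" using Pi integrable_completion[of P lborel] PmL Pm by (simp add: lborel_prod)
  have Tm: "(\<lambda>p. indicator (A \<times> B) p * (a (fst p) * b (snd p))) \<in> borel_measurable lebesgue"
    by (rule borel_measurable_AE[OF PmL ae])
  have "integrable lebesgue (\<lambda>p. indicator (A \<times> B) p * (a (fst p) * b (snd p)))"
    by (rule integrable_cong_AE_imp[OF Pil Tm ae])
  thus ?thesis unfolding set_integrable_def by simp
qed



definition "Tm p = (vector [fst (fst p), snd (fst p), snd p] :: real^3)"
definition "Ti (v::real^3) = ((v$1, v$2), v$3)"

lemma Tm_Ti: "Tm (Ti v) = v" unfolding Tm_def Ti_def by (simp add: vec_eq_iff forall_3 vector_3)
lemma Ti_Tm: "Ti (Tm p) = p" unfolding Tm_def Ti_def by (simp add: vector_3)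

lemma ex_3: "(\<exists>i::3. P i) \<longleftrightarrow> P 1 \<or> P 2 \<or> P 3"
  by (metis exhaust_3)

lemma Tm_img: "x \<in> Tm ` S \<longleftrightarrow> Ti x \<in> S"
proof
  assume "x \<in> Tm ` S" then obtain y where "y \<in> S" "x = Tm y" by blast
  thus "Ti x \<in> S" by (simp add: Ti_Tm)
next
  assume "Ti x \<in> S" hence "Tm (Ti x) \<in> Tm ` S" by blast
  thus "x \<in> Tm ` S" by (simp add: Tm_Ti)
qed

lemma Ti_img: "x \<in> Ti ` S \<longleftrightarrow> Tm x \<in> S"
proof
  assume "x \<in> Ti ` S" then obtain y where "y \<in> S" "x = Ti y" by blast
  thus "Tm x \<in> S" by (simp add: Tm_Ti)
next
  assume "Tm x \<in> S" hence "Ti (Tm x) \<in> Ti ` S" by blast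
  thus "x \<in> Ti ` S" by (simp add: Ti_Tm)
qed

lemma Tm_box: "Tm ` cbox u v = cbox (Tm u) (Tm v)"
proof -
  obtain a1 a2 a3 where u: "u = ((a1, a2), a3)" by (metis prod.exhaust)
  obtain b1 b2 b3 where v: "v = ((b1, b2), b3)" by (metis prod.exhaust)
  have "x \<in> Tm ` cbox u v \<longleftrightarrow> x \<in> cbox (Tm u) (Tm v)" for x
  proof -
    have "x \<in> Tm ` cbox u v \<longleftrightarrow> Ti x \<in> cbox u v" by (rule Tm_img)
    also have "\<dots> \<longleftrightarrow> x \<in> cbox (Tm u) (Tm v)"
      unfolding u v Ti_def Tm_def by (simp add: mem_box_cart forall_3 vector_3 cbox_interval less_eq_vec_def)
    finally show ?thesis .
  qed
  thus ?thesis by blast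
qed

lemma Ti_box: "Ti ` cbox u v = cbox (Ti u) (Ti v)"
proof -
  have "x \<in> Ti ` cbox u v \<longleftrightarrow> x \<in> cbox (Ti u) (Ti v)" for x
  proof -
    obtain a1 a2 a3 where x: "x = ((a1, a2), a3)" by (metis prod.exhaust)
    have "x \<in> Ti ` cbox u v \<longleftrightarrow> Tm x \<in> cbox u v" by (rule Ti_img)
    also have "\<dots> \<longleftrightarrow> x \<in> cbox (Ti u) (Ti v)"
      unfolding x Ti_def Tm_def by (simp add: mem_box_cart forall_3 vector_3 cbox_interval less_eq_vec_def)
    finally show ?thesis .
  qed
  thus ?thesis by blast
qed

lemma prod_3: "prod f (UNIV::3 set) = f 1 * f 2 * f 3"
  unfolding UNIV_3 by (simp add: ac_simps)

lemma content_Tm: "Henstock_Kurzweil_Integration.content (Tm ` cbox u v) = Henstock_Kurzweil_Integration.content (cbox u v)"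
proof -
  obtain a1 a2 a3 where u: "u = ((a1, a2), a3)" by (metis prod.exhaust)
  obtain b1 b2 b3 where v: "v = ((b1, b2), b3)" by (metis prod.exhaust)
  have e: "cbox (Tm u) (Tm v) = {} \<longleftrightarrow> b1 < a1 \<or> b2 < a2 \<or> b3 < a3"
    unfolding u v Tm_def interval_eq_empty_cart ex_3 by (simp add: vector_3)
  have r: "Henstock_Kurzweil_Integration.content (cbox u v) =
      Henstock_Kurzweil_Integration.content {a1..b1} * Henstock_Kurzweil_Integration.content {a2..b2} * Henstock_Kurzweil_Integration.content {a3..b3}"
    unfolding u v content_Pair unfolding cbox_interval ..
  show ?thesis
  proof (cases "b1 < a1 \<or> b2 < a2 \<or> b3 < a3")
    case True
    hence "Henstock_Kurzweil_Integration.content (cbox u v) = 0" unfolding r content_real_if by auto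
    moreover have "Henstock_Kurzweil_Integration.content (Tm ` cbox u v) = 0"
      unfolding Tm_box content_cbox_if_cart using e True by simp
    ultimately show ?thesis by simp
  next
    case False
    hence "Henstock_Kurzweil_Integration.content (cbox u v) = (b1 - a1) * (b2 - a2) * (b3 - a3)" unfolding r content_real_if by auto
    moreover have "Henstock_Kurzweil_Integration.content (Tm ` cbox u v) = (b1 - a1) * (b2 - a2) * (b3 - a3)"
      unfolding Tm_box content_cbox_if_cart using e False unfolding prod_3 by (simp add: u v Tm_def vector_3)
    ultimately show ?thesis by simp
  qed
qed

lemma Tm_lin: "Tm p = fst (fst p) *\<^sub>R axis 1 1 + snd (fst p) *\<^sub>R axis 2 1 + snd p *\<^sub>R axis 3 1"
  unfolding Tm_def by (simp add: vec_eq_iff forall_3 vector_3 axis_def)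

lemma Tm_cont: "continuous (at x) Tm"
  unfolding Tm_lin[abs_def] by (intro continuous_intros)


lemma compact_lebesgue: "compact S \<Longrightarrow> S \<in> sets lebesgue"
  using lmeasurable_compact[of S] by (simp add: fmeasurable_def)

lemma abs_mult_cont:
  fixes c :: "'a::euclidean_space \<Rightarrow> real"
  assumes c: "continuous_on S c" and S: "compact S" and g: "g absolutely_integrable_on S"
  shows "(\<lambda>x. c x * g x) absolutely_integrable_on S"
proof (rule absolutely_integrable_bounded_measurable_product[OF bilinear_times _ _ _ g])
  show "c \<in> borel_measurable (lebesgue_on S)"
    by (rule continuous_imp_measurable_on_sets_lebesgue[OF c compact_lebesgue[OF S]])
  show "S \<in> sets lebesgue" by (rule compact_lebesgue[OF S])
  show "bounded (c ` S)" by (rule compact_imp_bounded[OF compact_continuous_image[OF c S]])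
qed

lemma cone_dom_compact: "compact cone_dom" unfolding cone_dom_def by simp

lemma L6:
  fixes \<Phi> :: "real \<times> real \<Rightarrow> real"
  assumes ai: "\<Phi> absolutely_integrable_on cone_dom"
    and cv: "\<And>\<theta> x y l. x \<in> {0..1} \<Longrightarrow> y \<in> {0..1} \<Longrightarrow> 0 \<le> l \<Longrightarrow> l \<le> 1 \<Longrightarrow>
               \<Phi> ((1-l)*x + l*y, \<theta>) \<le> (1-l) * \<Phi> (x, \<theta>) + l * \<Phi> (y, \<theta>)"
  shows "0 \<le> integral cone_dom (\<lambda>p. (1 - 6 * fst p + 6 * (fst p)^2) * \<Phi> p)"
proof -
  define k where "k t = 1 - 6 * t + 6 * t^2" for t :: real
  have kc: "continuous_on cone_dom (\<lambda>p. k (fst p))" unfolding k_def by (intro continuous_intros)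
  have a1: "(\<lambda>p. k (fst p) * \<Phi> p) absolutely_integrable_on cbox (0, 0) (1, 2*pi)"
    using abs_mult_cont[OF kc cone_dom_compact ai] unfolding cone_dom_def .
  note sw = swap_abs[OF a1]
  have e: "cbox (0::real, 0::real) (2*pi, 1) = {0..2*pi} \<times> {0..1}" unfolding cbox_Pair_eq by (simp add: cbox_interval)
  have sw1: "(\<lambda>p. k (snd p) * \<Phi> (snd p, fst p)) absolutely_integrable_on {0..2*pi} \<times> {0..1}"
    using sw(1) unfolding e by (simp add: split_beta')
  note fb = fubini_abs[OF sw1]
  have ae: "AE \<theta> in lebesgue. 0 \<le> indicator {0..2*pi} \<theta> * integral {0..1} (\<lambda>t. k t * \<Phi> (t, \<theta>))"
    using fb(1)
  proof eventually_elim
    case (elim \<theta>)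
    show ?case
    proof (cases "\<theta> \<in> {0..2*pi}")
      case True
      hence "(\<lambda>t. k t * \<Phi> (t, \<theta>)) absolutely_integrable_on {0..1}" using elim by simp
      hence "(\<lambda>t. (1 - 6*t + 6*t^2) * \<Phi> (t, \<theta>)) integrable_on {0..1}"
        unfolding k_def by (simp add: absolutely_integrable_on_def)
      hence "0 \<le> integral {0..1} (\<lambda>t. (1 - 6*t + 6*t^2) * \<Phi> (t, \<theta>))"
        by (intro conv_order_1d) (use cv in auto)
      thus ?thesis using True unfolding k_def by simp
    qed simp
  qed
  have "integral cone_dom (\<lambda>p. (1 - 6 * fst p + 6 * (fst p)^2) * \<Phi> p)
      = integral {0..2*pi} (\<lambda>\<theta>. integral {0..1} (\<lambda>t. k t * \<Phi> (t, \<theta>)))"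
    using sw(2) fb(3) unfolding e cone_dom_def k_def by (simp add: split_beta')
  also have "\<dots> = (LINT \<theta>|lebesgue. indicator {0..2*pi} \<theta> * integral {0..1} (\<lambda>t. k t * \<Phi> (t, \<theta>)))"
    using set_lebesgue_integral_eq_integral(2)[OF fb(2)] unfolding set_lebesgue_integral_def by simp
  also have "\<dots> \<ge> 0" by (rule integral_nonneg_AE[OF ae])
  finally show ?thesis .
qed


lemma int01_t1t: "((\<lambda>t::real. t * (1 - t)) has_integral 1/6) {0..1}"
proof -
  have "((\<lambda>t::real. t * (1 - t)) has_integral ((\<lambda>t. t^2/2 - t^3/3) 1 - (\<lambda>t. t^2/2 - t^3/3) 0)) {0..1}"
    by (rule fundamental_theorem_of_calculus)
       (auto intro!: derivative_eq_intros simp: has_real_derivative_iff_has_vector_derivative[symmetric] algebra_simps power2_eq_square)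
  thus ?thesis by simp
qed

lemma int01_lin: "((\<lambda>w::real. a * (1 - w) + b * w) has_integral (a + b) / 2) {0..1}"
proof -
  have "((\<lambda>w::real. a * (1 - w) + b * w) has_integral ((\<lambda>w. a * w - a * w^2/2 + b * w^2/2) 1 - (\<lambda>w. a * w - a * w^2/2 + b * w^2/2) 0)) {0..1}"
    by (rule fundamental_theorem_of_calculus)
       (auto intro!: derivative_eq_intros simp: has_real_derivative_iff_has_vector_derivative[symmetric] algebra_simps power2_eq_square)
  thus ?thesis by (simp add: field_simps)
qed

context dcone_f begin

definition "P3 = cbox ((0::real, 0::real), 0::real) ((1, 2*pi), 1)"

lemma P3_eq: "P3 = cone_dom \<times> {0..1}" unfolding P3_def cone_dom_def cbox_Pair_eq by (simp add: cbox_interval)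

lemma Ti_Bx: "Ti ` Bx = P3" unfolding Bx_def Ti_box P3_def Ti_def by (simp add: vector_3)

lemma twid_Bx:
  fixes F :: "real^3 \<Rightarrow> real"
  assumes "F absolutely_integrable_on Bx"
  shows "(\<lambda>p. F (Tm p)) absolutely_integrable_on P3" "integral P3 (\<lambda>p. F (Tm p)) = integral Bx F"
proof -
  note t = twiddle_abs[where g=Tm and h=Ti and F=F and a="vector [0,0,0]" and b="vector [1, 2*pi, 1]"]
  have hy: "\<And>x. Ti (Tm x) = x" "\<And>x. Tm (Ti x) = x" by (simp_all add: Ti_Tm Tm_Ti)
  have b1: "\<And>u v. \<exists>w z. Tm ` cbox u v = cbox w z" using Tm_box by blast
  have b2: "\<And>u v. \<exists>w z. Ti ` cbox u v = cbox w z" using Ti_box by blast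
  note tt = t[OF hy Tm_cont b1 b2 content_Tm assms[unfolded Bx_def]]
  show "(\<lambda>p. F (Tm p)) absolutely_integrable_on P3" using tt(1) Ti_Bx unfolding Bx_def by simp
  show "integral P3 (\<lambda>p. F (Tm p)) = integral Bx F" using tt(2) Ti_Bx unfolding Bx_def by simp
qed

lemma Gv_Tm: "Gv (Tm p) = GG (fst (fst p)) (snd (fst p)) (snd p)" "(Tm p)$1 = fst (fst p)"
  unfolding Gv_def Tm_def by (simp_all add: vector_3)

lemma Gv_cont: "continuous_on (S :: (real^3) set) Gv"
  unfolding continuous_on_eq_continuous_within
proof (rule ballI)
  fix x :: "real^3" assume "x \<in> S"
  show "continuous (at x within S) Gv" using Gv_deriv[of x S] by (rule has_derivative_continuous)
qed

lemma DD_Gv_Bx: "DD = Gv ` Bx"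
proof
  show "Gv ` Bx \<subseteq> DD"
  proof
    fix x assume "x \<in> Gv ` Bx"
    then obtain v where v: "v \<in> Bx" "x = Gv v" by blast
    thus "x \<in> DD" using mem_TT[of "v$1" "v$3" "v$2"] TT_sub_DD unfolding Bx_def Gv_def
      by (auto simp: mem_box_cart forall_3 vector_3)
  qed
  show "DD \<subseteq> Gv ` Bx"
  proof
    fix x assume "x \<in> DD"
    then obtain \<theta> where "x \<in> TT \<theta>" using DD_eq by blast
    then obtain t w where tw: "0 \<le> t" "t \<le> 1" "0 \<le> w" "w \<le> 1" "x = GG t \<theta> w" by (rule TT_GG)
    obtain \<theta>' where th: "0 \<le> \<theta>'" "\<theta>' < 2*pi" "uu \<theta>' = uu \<theta>" by (rule uu_mod)
    have "x = Gv (vector [t, \<theta>', w] :: real^3)" unfolding tw(5) Gv_def GG_def th(3)[symmetric] by (simp add: vector_3)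
    moreover have "(vector [t, \<theta>', w] :: real^3) \<in> Bx" using tw th unfolding Bx_def
      by (auto simp: mem_box_cart forall_3 vector_3)
    ultimately show "x \<in> Gv ` Bx" by blast
  qed
qed

lemma DD_compact: "compact DD"
  unfolding DD_Gv_Bx Bx_def by (intro compact_continuous_image Gv_cont) simp

lemma DD_lmeas: "DD \<in> lmeasurable" by (rule lmeasurable_compact[OF DD_compact])

lemma content_DD: "Henstock_Kurzweil_Integration.content DD = kk * pi / 3"
proof -
  have c1: "(\<lambda>x::real^3. 1::real) absolutely_integrable_on DD" by (rule absolutely_integrable_on_const[OF DD_lmeas])
  note v = vol_main[OF c1]
  note w = twid_Bx[OF v(1)]
  have a: "integral P3 (\<lambda>p. kk * (fst (fst p) * (1 - fst (fst p))) * 1) = integral Bx (\<lambda>v. kk * (v$1 * (1 - v$1)) * 1)"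
    using w(2) by (simp only: Gv_Tm)
  have "integral DD (\<lambda>x. 1::real) = integral P3 (\<lambda>p. kk * (fst (fst p) * (1 - fst (fst p))) * 1)"
    using v(2) a by (rule trans[OF _ sym])
  hence "integral DD (\<lambda>x. 1::real) = integral P3 (\<lambda>p. kk * (fst (fst p) * (1 - fst (fst p))))"
    by (simp only: mult_1_right)
  also have "\<dots> = kk * pi / 3"
  proof -
    have c: "continuous_on (cbox ((0::real, 0::real), 0::real) ((1, 2*pi), 1)) (\<lambda>p. kk * (fst (fst p) * (1 - fst (fst p))))"
      by (intro continuous_intros)
    have "integral P3 (\<lambda>p. kk * (fst (fst p) * (1 - fst (fst p))))
       = integral (cbox (0, 0) (1, 2*pi)) (\<lambda>x. integral (cbox 0 1) (\<lambda>y::real. kk * (fst x * (1 - fst x))))"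
      unfolding P3_def using integral_prod_continuous[OF c] by simp
    also have "\<dots> = integral (cbox (0::real, 0::real) (1, 2*pi)) (\<lambda>x. kk * (fst x * (1 - fst x)))" by simp
    also have "\<dots> = integral (cbox 0 1) (\<lambda>t::real. integral (cbox 0 (2*pi)) (\<lambda>\<theta>::real. kk * (t * (1 - t))))"
      using integral_prod_continuous[of 0 0 1 "2*pi" "\<lambda>x. kk * (fst x * (1 - fst x))"]
      by (simp add: continuous_intros)
    also have "\<dots> = integral {0..1} (\<lambda>t::real. (2*pi*kk) * (t * (1 - t)))" by (simp add: mult_ac)
    also have "\<dots> = (2*pi*kk) * (1/6)" using integral_unique[OF int01_t1t] by simp
    finally show ?thesis by simp
  qed
  finally have i: "integral DD (\<lambda>x. 1::real) = kk * pi / 3" .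
  have "measure lebesgue DD = integral DD (\<lambda>x. 1)" by (rule lmeasure_integral[OF DD_lmeas])
  moreover have "measure lebesgue DD = measure lborel DD"
    using DD_compact by (intro measure_completion) (simp add: borel_compact)
  ultimately show ?thesis using i by simp
qed


lemma EE_TT: assumes "0 \<le> t" "t \<le> 1" "h = h0 \<or> h = h1" shows "EE h t \<theta> \<in> TT \<theta>"
proof -
  have "EE h0 t \<theta> = GG t \<theta> 0" "EE h1 t \<theta> = GG t \<theta> 1" unfolding EE_def GG_def HH_def by simp_all
  thus ?thesis using assms mem_TT[of t 0 \<theta>] mem_TT[of t 1 \<theta>] by auto
qed

lemma EE_affine: "EE h ((1-l)*x + l*y) \<theta> = (1-l) *\<^sub>R EE h x \<theta> + l *\<^sub>R EE h y \<theta>"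
  unfolding EE_def by (simp add: algebra_simps)

lemma GG_comb: "GG t \<theta> w = (1-w) *\<^sub>R EE h0 t \<theta> + w *\<^sub>R EE h1 t \<theta>"
  unfolding GG_def EE_def HH_def by (simp add: algebra_simps)

lemma conv_TT:
  assumes "x \<in> TT \<theta>" "y \<in> TT \<theta>" "0 \<le> l" "l \<le> 1"
  shows "f ((1-l) *\<^sub>R x + l *\<^sub>R y) \<le> (1-l) * f x + l * f y"
proof (rule conv_seg)
  show "x \<in> DD" "y \<in> DD" using assms TT_sub_DD by auto
  have "closed_segment x y \<subseteq> TT \<theta>" unfolding TT_def
    by (rule closed_segment_subset_convex_hull) (use assms in \<open>auto simp: TT_def\<close>)
  thus "closed_segment x y \<subseteq> DD" using TT_sub_DD by blast
qed (use assms in auto)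

definition "Phi h = (\<lambda>p. f (EE h (fst p) (snd p)))"

lemma Phi_abs:
  assumes "(\<lambda>(t, \<theta>). f (EE h t \<theta>)) integrable_on cone_dom" "h = h0 \<or> h = h1"
    and K: "\<And>x. x \<in> DD \<Longrightarrow> K \<le> f x"
  shows "Phi h absolutely_integrable_on cone_dom"
proof -
  have cl: "cone_dom \<in> lmeasurable" by (rule lmeasurable_compact[OF cone_dom_compact])
  have i: "Phi h integrable_on cone_dom" using assms(1) unfolding Phi_def by (simp add: split_beta')
  have "(\<lambda>p. Phi h p - K) integrable_on cone_dom" by (rule integrable_diff[OF i integrable_on_const[OF cl]])
  moreover have "0 \<le> Phi h p - K" if "p \<in> cone_dom" for p
  proof -
    have "0 \<le> fst p" "fst p \<le> 1" using that unfolding cone_dom_def by (auto simp: cbox_Pair_eq)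
    hence "EE h (fst p) (snd p) \<in> DD" using EE_TT[OF _ _ assms(2)] TT_sub_DD by blast
    thus ?thesis using K unfolding Phi_def by simp
  qed
  ultimately have "(\<lambda>p. Phi h p - K) absolutely_integrable_on cone_dom" by (rule nonnegative_absolutely_integrable_1)
  hence "(\<lambda>p. (Phi h p - K) + K) absolutely_integrable_on cone_dom"
    by (rule set_integral_add(1)[OF _ absolutely_integrable_on_const[OF cl]])
  thus ?thesis by simp
qed

lemma Phi_L6:
  assumes "Phi h absolutely_integrable_on cone_dom" "h = h0 \<or> h = h1"
  shows "6 * integral cone_dom (\<lambda>p. fst p * (1 - fst p) * Phi h p) \<le> integral cone_dom (Phi h)"
proof -
  have "0 \<le> integral cone_dom (\<lambda>p. (1 - 6 * fst p + 6 * (fst p)^2) * Phi h p)"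
  proof (rule L6[OF assms(1)])
    fix \<theta> x y l :: real assume xy: "x \<in> {0..1}" "y \<in> {0..1}" "0 \<le> l" "l \<le> 1"
    show "Phi h ((1-l)*x + l*y, \<theta>) \<le> (1-l) * Phi h (x, \<theta>) + l * Phi h (y, \<theta>)"
      unfolding Phi_def fst_conv snd_conv EE_affine
      by (rule conv_TT) (use xy EE_TT[OF _ _ assms(2)] in auto)
  qed
  moreover have "(\<lambda>p. fst p * (1 - fst p) * Phi h p) absolutely_integrable_on cone_dom"
    by (rule abs_mult_cont[OF _ cone_dom_compact assms(1)]) (intro continuous_intros)
  moreover have e: "(\<lambda>p. (1 - 6 * fst p + 6 * (fst p)^2) * Phi h p) = (\<lambda>p. Phi h p - 6 * (fst p * (1 - fst p) * Phi h p))"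
    by (simp add: fun_eq_iff algebra_simps power2_eq_square)
  ultimately have "0 \<le> integral cone_dom (Phi h) - integral cone_dom (\<lambda>p. 6 * (fst p * (1 - fst p) * Phi h p))"
    using assms(1) by (simp add: integral_diff absolutely_integrable_on_def integrable_on_cmult_left)
  thus ?thesis by simp
qed

lemma main_ineq:
  assumes intf: "f integrable_on DD"
    and i0: "(\<lambda>(t, \<theta>). f (EE h0 t \<theta>)) integrable_on cone_dom"
    and i1: "(\<lambda>(t, \<theta>). f (EE h1 t \<theta>)) integrable_on cone_dom"
  shows "integral DD f / Henstock_Kurzweil_Integration.content DD \<le>
           (integral cone_dom (\<lambda>(t, \<theta>). f (EE h0 t \<theta>)) + integral cone_dom (\<lambda>(t, \<theta>). f (EE h1 t \<theta>))) / (4*pi)"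
proof -
  obtain K where K: "\<And>x. x \<in> DD \<Longrightarrow> K \<le> f x" using lower_bound by blast
  have fabs: "f absolutely_integrable_on DD"
  proof -
    have "(\<lambda>x. f x - K) integrable_on DD" by (rule integrable_diff[OF intf integrable_on_const[OF DD_lmeas]])
    hence "(\<lambda>x. f x - K) absolutely_integrable_on DD"
      by (rule nonnegative_absolutely_integrable_1) (use K in auto)
    hence "(\<lambda>x. (f x - K) + K) absolutely_integrable_on DD"
      by (rule set_integral_add(1)[OF _ absolutely_integrable_on_const[OF DD_lmeas]])
    thus ?thesis by simp
  qed
  have P0: "Phi h0 absolutely_integrable_on cone_dom" by (rule Phi_abs[OF i0 _ K]) simp
  have P1: "Phi h1 absolutely_integrable_on cone_dom" by (rule Phi_abs[OF i1 _ K]) simp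
  note V = vol_main[OF fabs]
  note W = twid_Bx[OF V(1)]
  define Wf where "Wf p = kk * (fst (fst p) * (1 - fst (fst p))) * f (GG (fst (fst p)) (snd (fst p)) (snd p))" for p
  have Wf_eq: "(\<lambda>p. kk * ((Tm p)$1 * (1 - (Tm p)$1)) * f (Gv (Tm p))) = Wf"
    unfolding Wf_def Gv_Tm by simp
  have Wi: "Wf absolutely_integrable_on P3" using W(1) unfolding Wf_eq .
  have DDW: "integral DD f = integral P3 Wf" using V(2) W(2) unfolding Wf_eq by simp
  define a where "a h x = kk * (fst x * (1 - fst x)) * Phi h x" for h x
  have ai: "a h absolutely_integrable_on cone_dom" if "Phi h absolutely_integrable_on cone_dom" for h
    unfolding a_def by (rule abs_mult_cont[OF _ cone_dom_compact that]) (intro continuous_intros)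
  define R3 where "R3 p = a h0 (fst p) * (1 - snd p) + a h1 (fst p) * snd p" for p
  have Ri: "R3 absolutely_integrable_on P3"
  proof -
    have c1: "(\<lambda>w::real. 1 - w) absolutely_integrable_on {0..1}"
      by (rule absolutely_integrable_continuous_real) (intro continuous_intros)
    have c2: "(\<lambda>w::real. w) absolutely_integrable_on {0..1}"
      by (rule absolutely_integrable_continuous_real) (intro continuous_intros)
    have "(\<lambda>p. a h0 (fst p) * (1 - snd p)) absolutely_integrable_on cone_dom \<times> {0..1}"
      by (rule prod_abs[OF ai[OF P0] c1])
    moreover have "(\<lambda>p. a h1 (fst p) * snd p) absolutely_integrable_on cone_dom \<times> {0..1}"
      by (rule prod_abs[OF ai[OF P1] c2])
    ultimately show ?thesis unfolding R3_def P3_eq by (rule set_integral_add(1))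
  qed
  have WR: "Wf p \<le> R3 p" if "p \<in> P3" for p
  proof -
    obtain t \<theta> w where p: "p = ((t, \<theta>), w)" by (metis prod.exhaust)
    have tw: "0 \<le> t" "t \<le> 1" "0 \<le> w" "w \<le> 1" using that unfolding p P3_eq cone_dom_def by (auto simp: cbox_Pair_eq)
    have "f (GG t \<theta> w) \<le> (1-w) * f (EE h0 t \<theta>) + w * f (EE h1 t \<theta>)"
      unfolding GG_comb by (rule conv_TT) (use tw EE_TT in auto)
    moreover have "0 \<le> kk * (t * (1 - t))" using kk_pos tw by simp
    ultimately have "kk * (t * (1 - t)) * f (GG t \<theta> w) \<le> kk * (t * (1 - t)) * ((1-w) * f (EE h0 t \<theta>) + w * f (EE h1 t \<theta>))"
      by (rule mult_left_mono)
    thus ?thesis unfolding Wf_def R3_def a_def Phi_def p by (simp add: algebra_simps)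
  qed
  have le1: "integral P3 Wf \<le> integral P3 R3"
    by (rule integral_le) (use Wi Ri WR in \<open>auto simp: absolutely_integrable_on_def\<close>)
  have R3int: "integral P3 R3 = (integral cone_dom (a h0) + integral cone_dom (a h1)) / 2"
  proof -
    have Ri': "R3 absolutely_integrable_on cone_dom \<times> {0..1}" using Ri unfolding P3_eq .
    have "integral P3 R3 = integral cone_dom (\<lambda>x. integral {0..1} (\<lambda>w. R3 (x, w)))"
      using fubini_abs(3)[OF Ri'] unfolding P3_eq .
    also have "\<dots> = integral cone_dom (\<lambda>x. (a h0 x + a h1 x) / 2)"
    proof (rule integral_cong)
      fix x show "integral {0..1} (\<lambda>w. R3 (x, w)) = (a h0 x + a h1 x) / 2"
        unfolding R3_def fst_conv snd_conv using int01_lin[of "a h0 x" "a h1 x"] by (rule integral_unique)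
    qed
    also have "\<dots> = (integral cone_dom (a h0) + integral cone_dom (a h1)) / 2"
      using ai[OF P0] ai[OF P1]
      by (simp add: integral_add integral_divide absolutely_integrable_on_def)
    finally show ?thesis .
  qed
  have aI: "integral cone_dom (a h) = kk * integral cone_dom (\<lambda>p. fst p * (1 - fst p) * Phi h p)" for h
  proof -
    have "a h = (\<lambda>p. kk * (fst p * (1 - fst p) * Phi h p))" unfolding a_def by (simp add: fun_eq_iff mult_ac)
    thus ?thesis by simp
  qed
  have l60: "6 * integral cone_dom (\<lambda>p. fst p * (1 - fst p) * Phi h0 p) \<le> integral cone_dom (Phi h0)"
    by (rule Phi_L6[OF P0]) simp
  have l61: "6 * integral cone_dom (\<lambda>p. fst p * (1 - fst p) * Phi h1 p) \<le> integral cone_dom (Phi h1)"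
    by (rule Phi_L6[OF P1]) simp
  define I0 where "I0 = integral cone_dom (Phi h0)"
  define I1 where "I1 = integral cone_dom (Phi h1)"
  have "integral DD f \<le> (integral cone_dom (a h0) + integral cone_dom (a h1)) / 2"
    using DDW le1 R3int by simp
  also have "\<dots> \<le> kk * (I0 + I1) / 12"
  proof -
    define X0 where "X0 = integral cone_dom (\<lambda>p. fst p * (1 - fst p) * Phi h0 p)"
    define X1 where "X1 = integral cone_dom (\<lambda>p. fst p * (1 - fst p) * Phi h1 p)"
    have m0: "kk * (6 * X0) \<le> kk * I0" using mult_left_mono[OF l60[folded X0_def I0_def], of kk] kk_pos by simp
    have m1: "kk * (6 * X1) \<le> kk * I1" using mult_left_mono[OF l61[folded X1_def I1_def], of kk] kk_pos by simp
    have "(kk * X0 + kk * X1) / 2 \<le> kk * (I0 + I1) / 12" using m0 m1 by (simp add: field_simps)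
    thus ?thesis unfolding aI X0_def X1_def .
  qed
  finally have main: "integral DD f \<le> kk * (I0 + I1) / 12" .
  have cpos: "0 < Henstock_Kurzweil_Integration.content DD" unfolding content_DD using kk_pos by simp
  have "integral DD f / Henstock_Kurzweil_Integration.content DD \<le> (kk * (I0 + I1) / 12) / (kk * pi / 3)"
    using divide_right_mono[OF main, of "Henstock_Kurzweil_Integration.content DD"] cpos unfolding content_DD by simp
  also have "\<dots> = (I0 + I1) / (4 * pi)" using kk_pos by (simp add: field_simps)
  finally show ?thesis unfolding I0_def I1_def Phi_def by (simp add: split_beta')
qed

end


theorem theorem7p4:
  fixes C e1 e2 O0 O1 :: "real^3" and R :: real and f :: "real^3 \<Rightarrow> real"
  assumes orth: "e1 \<bullet> e1 = 1" "e2 \<bullet> e2 = 1" "e1 \<bullet> e2 = 0"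
    and R: "R > 0"
    and O0: "O0 \<in> axis3 C e1 e2" "O0 \<notin> plane3 C e1 e2"
    and O1: "O1 \<in> axis3 C e1 e2" "O1 \<notin> plane3 C e1 e2"
    and neq: "O0 \<noteq> O1"
    and conv: "convex_fun_on (dicone (circle3 C e1 e2 R) O0 O1) f"
    and intf: "f integrable_on dicone (circle3 C e1 e2 R) O0 O1"
    and intg: "\<And>A. A \<in> {O0, O1} \<Longrightarrow> surface_integrable (cone_param C e1 e2 R A) cone_dom
                  (\<lambda>x. f x / infdist x (axis3 C e1 e2))"
  shows "vol_avg (dicone (circle3 C e1 e2 R) O0 O1) f
         \<le> R / 4 * (surface_avg (cone_param C e1 e2 R O0) cone_dom (\<lambda>x. f x / infdist x (axis3 C e1 e2))
                  + surface_avg (cone_param C e1 e2 R O1) cone_dom (\<lambda>x. f x / infdist x (axis3 C e1 e2)))"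
proof -
  obtain h0 where O0e: "O0 = C + h0 *\<^sub>R cross3 e1 e2" using O0(1) unfolding axis3_def by blast
  obtain h1 where O1e: "O1 = C + h1 *\<^sub>R cross3 e1 e2" using O1(1) unfolding axis3_def by blast
  have h0nz: "h0 \<noteq> 0"
  proof
    assume "h0 = 0"
    hence "O0 = C + 0 *\<^sub>R e1 + 0 *\<^sub>R e2" using O0e by simp
    hence "O0 \<in> plane3 C e1 e2" unfolding plane3_def by blast
    thus False using O0(2) by simp
  qed
  have h1nz: "h1 \<noteq> 0"
  proof
    assume "h1 = 0"
    hence "O1 = C + 0 *\<^sub>R e1 + 0 *\<^sub>R e2" using O1e by simp
    hence "O1 \<in> plane3 C e1 e2" unfolding plane3_def by blast
    thus False using O1(2) by simp
  qed
  have hne: "h0 \<noteq> h1" using neq O0e O1e by auto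
  interpret dcone C e1 e2 R h0 h1
    by unfold_locales (use orth R h0nz h1nz hne in auto)
  have O0n: "O0 = C + h0 *\<^sub>R nn" and O1n: "O1 = C + h1 *\<^sub>R nn" using O0e O1e unfolding nn_def by auto
  have DDe: "dicone (circle3 C e1 e2 R) O0 O1 = DD" unfolding DD_def O0_def O1_def O0n O1n ..
  interpret dcone_f C e1 e2 R h0 h1 f
    by unfold_locales (use conv DDe in simp)
  have Axe: "axis3 C e1 e2 = Ax" unfolding Ax_def ..
  have s0: "surface_integrable (cone_param C e1 e2 R (C + h0 *\<^sub>R nn)) cone_dom (\<lambda>x. f x / infdist x Ax)"
    using intg[of O0] unfolding O0n Axe by simp
  have s1: "surface_integrable (cone_param C e1 e2 R (C + h1 *\<^sub>R nn)) cone_dom (\<lambda>x. f x / infdist x Ax)"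
    using intg[of O1] unfolding O1n Axe by simp
  note g0 = surf_int_g[OF s0] and g1 = surf_int_g[OF s1]
  define I0 where "I0 = integral cone_dom (\<lambda>(t, \<theta>). f (EE h0 t \<theta>))"
  define I1 where "I1 = integral cone_dom (\<lambda>(t, \<theta>). f (EE h1 t \<theta>))"
  have a0: "surface_avg (cone_param C e1 e2 R O0) cone_dom (\<lambda>x. f x / infdist x (axis3 C e1 e2)) = I0 / (pi * R)"
    unfolding surface_avg_def O0n Axe g0(2) area_cone I0_def using sl_pos[of h0] by (simp add: field_simps)
  have a1: "surface_avg (cone_param C e1 e2 R O1) cone_dom (\<lambda>x. f x / infdist x (axis3 C e1 e2)) = I1 / (pi * R)"
    unfolding surface_avg_def O1n Axe g1(2) area_cone I1_def using sl_pos[of h1] by (simp add: field_simps)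
  have "vol_avg (dicone (circle3 C e1 e2 R) O0 O1) f \<le> (I0 + I1) / (4 * pi)"
    unfolding vol_avg_def DDe I0_def I1_def
    by (rule main_ineq[OF _ g0(1) g1(1)]) (use intf DDe in simp)
  also have "\<dots> = R / 4 * (I0 / (pi * R) + I1 / (pi * R))" using R by (simp add: field_simps)
  finally show ?thesis unfolding a0 a1 .
qed

end
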